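(* Let $J\ge1$, $K,L\ge 0$, $p,q,n_1,\dots,n_J\ge1$, $n=\sum_j n_j$, $\mathbf X_\cdot\in\mathbb R^{p\times n}$, $\mathbf Y_\cdot=[\mathbf Y_1,\dots,\mathbf Y_J]\in\mathbb R^{q\times n}$ with $\mathbf Y_j\in\mathbb R^{q\times n_j}$, binary matrices $\mathbf C_Y\in\{0,1\}^{J\times K}$, $\mathbf C_S\in\{0,1\}^{J\times L}$, and penalties $\lambda_B^{(k)}>0$, $\lambda_S^{(l)}>0$. Define $\mathbf Y_\cdot^{(k)}=[\mathbf Y_1^{(k)},\dots,\mathbf Y_J^{(k)}]$ with $\mathbf Y_j^{(k)}=\mathbf Y_j$ if $\mathbf C_Y[j,k]=1$ and $\mathbf 0_{q\times n_j}$ otherwise; let $\mathcal S_l$ be the set of $p\times n$ matrices whose $j$-th column block (of width $n_j$) is zero whenever $\mathbf C_S[j,l]=0$. Let $$f(\{\mathbf B_k\},\{\mathbf S^{(l)}\})=\tfrac12\Big\|\mathbf X_\cdot-\sum_{k}\mathbf B_k\mathbf Y_\cdot^{(k)}-\sum_{l}\mathbf S^{(l)}\Big\|_F^2+\sum_k\lambda_B^{(k)}\|\mathbf B_k\|_*+\sum_l\lambda_S^{(l)}\|\mathbf S^{(l)}\|_*$$ over $\mathbf B_k\in\mathbb R^{p\times q}$, $\mathbf S^{(l)}\in\mathcal S_l$. The following conditions are needed to allow non-zero estimation of the modules, in the sense that if a listed condition fails, then for every minimizer of $f$ there is another minimizer of $f$ (with objective value no larger) in which the indicated module is zero: 1.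 (module $\mathbf B_k$) Let $\mathcal I_k\subset\{1,\dots,K\}\setminus\{k\}$ be any set with $\sum_{i\in\mathcal I_k}\mathbf C_Y[\cdot,i]=c_y\,\mathbf C_Y[\cdot,k]$ for some positive integer $c_y$. Then $\lambda_B^{(k)}<\frac1{c_y}\sum_{i\in\mathcal I_k}\lambda_B^{(i)}$. 2. (module $\mathbf B_k$) Let $\mathcal I_k\subset\{1,\dots,L\}$ be any set with $\sum_{i\in\mathcal I_k}\mathbf C_S[\cdot,i]=c_{sy}\,\mathbf C_Y[\cdot,k]$ for some positive integer $c_{sy}$. Then $\lambda_B^{(k)}<\frac1{c_{sy}}\sum_{i\in\mathcal I_k}\lambda_S^{(i)}\|\mathbf Y_\cdot^{(k)}\|_*$. 3. (module $\mathbf S^{(l')}$) For $l\ne l'$ with $\mathbf C_S[j,l]\ge\mathbf C_S[j,l']$ for all $j$: $\lambda_S^{(l')}<\lambda_S^{(l)}$. 4. (module $\mathbf S^{(l)}$) Let $\mathcal I_l\subset\{1,\dots,L\}\setminus\{l\}$ be any set with $\sum_{i\in\mathcal I_l}\mathbf C_S[\cdot,i]=c_s\,\mathbf C_S[\cdot,l]$ for some positive integer $c_s$. Then $\lambda_S^{(l)}<\frac1{c_s}\sum_{i\in\mathcal I_l}\lambda_S^{(i)}$.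
   Context: $\|\cdot\|_*$ is the nuclear norm and $\|\cdot\|_F$ the Frobenius norm; $\mathbf C[\cdot,i]$ denotes the $i$-th column of $\mathbf C$. The indicator matrices specify on which cohorts (column blocks) each module is present. *)

theory Defs
  imports "Jordan_Normal_Form.Char_Poly"
begin

definition frob_norm :: "real mat \<Rightarrow> real" where
  "frob_norm A = sqrt (\<Sum>i<dim_row A. \<Sum>j<dim_col A. (A $$ (i,j))\<^sup>2)"

text \<open>Nuclear norm = sum of the singular values, the singular values being the square
  roots of the eigenvalues of A^T A, counted with (algebraic) multiplicity.\<close>
definition nuc_norm :: "real mat \<Rightarrow> real" where
  "nuc_norm A = (let P = char_poly (transpose_mat A * A) in
     \<Sum>x\<in>{x. poly P x = 0}. real (order x P) * sqrt x)"

text \<open>Column c (0-based) lies in the j-th column block (0-based), blocks having widths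
  nj 0, nj 1, ... placed consecutively.\<close>
definition in_block :: "(nat \<Rightarrow> nat) \<Rightarrow> nat \<Rightarrow> nat \<Rightarrow> bool" where
  "in_block nj j c \<longleftrightarrow> (\<Sum>i<j. nj i) \<le> c \<and> c < (\<Sum>i<Suc j. nj i)"

definition mod_data :: "nat \<Rightarrow> (nat \<Rightarrow> nat) \<Rightarrow> (nat \<Rightarrow> nat \<Rightarrow> nat) \<Rightarrow> nat \<Rightarrow> real mat \<Rightarrow> real mat" where
  "mod_data J nj C k Y = mat (dim_row Y) (dim_col Y)
     (\<lambda>(r,c). if (\<exists>j<J. in_block nj j c \<and> C j k = 1) then Y $$ (r,c) else 0)"

definition S_set :: "nat \<Rightarrow> nat \<Rightarrow> nat \<Rightarrow> (nat \<Rightarrow> nat) \<Rightarrow> (nat \<Rightarrow> nat \<Rightarrow> nat) \<Rightarrow> nat \<Rightarrow> real mat set" where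
  "S_set p n J nj C l = {S \<in> carrier_mat p n.
     \<forall>j<J. C j l = 0 \<longrightarrow> (\<forall>r<p. \<forall>c<n. in_block nj j c \<longrightarrow> S $$ (r,c) = 0)}"

definition feasible :: "nat \<Rightarrow> nat \<Rightarrow> nat \<Rightarrow> nat \<Rightarrow> (nat \<Rightarrow> nat) \<Rightarrow> nat \<Rightarrow> nat \<Rightarrow>
    (nat \<Rightarrow> nat \<Rightarrow> nat) \<Rightarrow> (nat \<Rightarrow> real mat) \<Rightarrow> (nat \<Rightarrow> real mat) \<Rightarrow> bool" where
  "feasible p q n J nj K L CS B S \<longleftrightarrow>
     (\<forall>k<K. B k \<in> carrier_mat p q) \<and> (\<forall>l<L. S l \<in> S_set p n J nj CS l)"

definition obj :: "nat \<Rightarrow> nat \<Rightarrow> nat \<Rightarrow> (nat \<Rightarrow> nat) \<Rightarrow> nat \<Rightarrow> nat \<Rightarrow> (nat \<Rightarrow> nat \<Rightarrow> nat) \<Rightarrow>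
    real mat \<Rightarrow> real mat \<Rightarrow> (nat \<Rightarrow> real) \<Rightarrow> (nat \<Rightarrow> real) \<Rightarrow>
    (nat \<Rightarrow> real mat) \<Rightarrow> (nat \<Rightarrow> real mat) \<Rightarrow> real" where
  "obj p n J nj K L CY X Y lamB lamS B S =
     (1/2) * (frob_norm (mat p n (\<lambda>(r,c). X $$ (r,c)
                - (\<Sum>k<K. (B k * mod_data J nj CY k Y) $$ (r,c))
                - (\<Sum>l<L. S l $$ (r,c)))))\<^sup>2
     + (\<Sum>k<K. lamB k * nuc_norm (B k))
     + (\<Sum>l<L. lamS l * nuc_norm (S l))"

definition is_minimizer where
  "is_minimizer p q n J nj K L CY CS X Y lamB lamS B S \<longleftrightarrow>
     feasible p q n J nj K L CS B S \<and>
     (\<forall>B' S'. feasible p q n J nj K L CS B' S' \<longrightarrow>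
        obj p n J nj K L CY X Y lamB lamS B S \<le> obj p n J nj K L CY X Y lamB lamS B' S')"

end

theory Submission
  imports Defs
begin

lemma real_eigen_exists:
  fixes M :: "real mat"
  assumes M: "M \<in> carrier_mat n n" and n: "n > 0"
    and sym: "\<And>i j. i < n \<Longrightarrow> j < n \<Longrightarrow> M $$ (i,j) = M $$ (j,i)"
  shows "\<exists>e. poly (char_poly M) e = 0"
proof -
  define Mc where "Mc = (of_real_hom.mat_hom M :: complex mat)"
  have Mc: "Mc \<in> carrier_mat n n" using M unfolding Mc_def by auto
  from char_poly_factorized[OF Mc] obtain as where
    cp: "char_poly Mc = (\<Prod>a\<leftarrow>as. [:- a, 1:])" and len: "length as = n" by auto
  from len n obtain a rest where as: "as = a # rest" by (cases as) auto
  have "poly (char_poly Mc) a = 0" unfolding cp as by simp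
  hence "eigenvalue Mc a" using eigenvalue_root_char_poly[OF Mc] by simp
  then obtain z where ev: "eigenvector Mc z a" unfolding eigenvalue_def by auto
  hence z: "z \<in> carrier_vec n" and z0: "z \<noteq> 0\<^sub>v n" and eq: "Mc *\<^sub>v z = a \<cdot>\<^sub>v z"
    using Mc unfolding eigenvector_def by auto
  have Mcij: "Mc $$ (i,j) = complex_of_real (M $$ (i,j))" if "i < n" "j < n" for i j
    using that M unfolding Mc_def by auto
  have comp: "(\<Sum>j<n. Mc $$ (i,j) * z $ j) = a * z $ i" if "i < n" for i
  proof -
    have "(Mc *\<^sub>v z) $ i = a * z $ i" using eq that z by simp
    moreover have "(Mc *\<^sub>v z) $ i = (\<Sum>j<n. Mc $$ (i,j) * z $ j)"
      using that Mc z by (auto simp: scalar_prod_def atLeast0LessThan)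
    ultimately show ?thesis by simp
  qed
  define s where "s = (\<Sum>i<n. \<Sum>j<n. cnj (z $ i) * Mc $$ (i,j) * z $ j)"
  define N where "N = (\<Sum>i<n. cnj (z $ i) * z $ i)"
  have sN: "s = a * N"
  proof -
    have "s = (\<Sum>i<n. cnj (z $ i) * (\<Sum>j<n. Mc $$ (i,j) * z $ j))"
      unfolding s_def by (simp add: sum_distrib_left mult.assoc)
    also have "\<dots> = (\<Sum>i<n. cnj (z $ i) * (a * z $ i))" using comp by simp
    also have "\<dots> = a * N" unfolding N_def by (simp add: sum_distrib_left algebra_simps)
    finally show ?thesis .
  qed
  have "cnj s = (\<Sum>i<n. \<Sum>j<n. z $ i * Mc $$ (i,j) * cnj (z $ j))"
    unfolding s_def cnj_sum by (intro sum.cong refl, simp add: Mcij)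
  also have "\<dots> = (\<Sum>j<n. \<Sum>i<n. z $ i * Mc $$ (i,j) * cnj (z $ j))"
    by (rule sum.swap)
  also have "\<dots> = s" unfolding s_def
    by (intro sum.cong refl, simp add: Mcij sym mult.commute mult.left_commute)
  finally have sreal: "cnj s = s" .
  have Nreal: "N = complex_of_real (\<Sum>i<n. (cmod (z $ i))\<^sup>2)"
    unfolding N_def of_real_sum by (intro sum.cong refl) (simp only: complex_norm_square mult.commute)
  from z0 z obtain i where i: "i < n" "z $ i \<noteq> 0" by (metis carrier_vecD eq_vecI index_zero_vec(1,2))
  have Npos: "(\<Sum>i<n. (cmod (z $ i))\<^sup>2) > 0"
    by (rule sum_pos2[of _ i], insert i, auto)
  have N0: "N \<noteq> 0" using Npos unfolding Nreal of_real_eq_0_iff by linarith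
  have "a = s / N" using sN N0 by simp
  hence "cnj a = a" using sreal Nreal by (simp add: complex_cnj_divide)
  hence "Im (cnj a) = Im a" by simp
  hence "Im a = 0" by simp
  hence aR: "a = complex_of_real (Re a)" by (simp add: complex_eq_iff)
  have "complex_of_real (poly (char_poly M) (Re a)) = poly (char_poly Mc) (complex_of_real (Re a))"
    unfolding Mc_def of_real_hom.char_poly_hom[OF M] by simp
  also have "\<dots> = 0" using aR \<open>poly (char_poly Mc) a = 0\<close> by simp
  finally have "complex_of_real (poly (char_poly M) (Re a)) = 0" .
  thus ?thesis by auto
qed

lemma mult_entry:
  assumes "A \<in> carrier_mat m k" "B \<in> carrier_mat k n" "i < m" "j < n"
  shows "(A * B) $$ (i,j) = (\<Sum>l<k. A $$ (i,l) * B $$ (l,j))"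
  using assms by (auto simp: scalar_prod_def atLeast0LessThan intro!: sum.cong)

lemma triple_entry:
  assumes A: "A \<in> carrier_mat k m" and M: "M \<in> carrier_mat k k'" and B: "B \<in> carrier_mat k' n"
    and i: "i < m" and j: "j < n"
  shows "(A\<^sup>T * M * B) $$ (i,j) = (\<Sum>a<k. \<Sum>b<k'. A $$ (a,i) * M $$ (a,b) * B $$ (b,j))"
proof -
  have AT: "A\<^sup>T \<in> carrier_mat m k" using A by auto
  have AM: "A\<^sup>T * M \<in> carrier_mat m k'" using AT M by auto
  have "(A\<^sup>T * M * B) $$ (i,j) = (\<Sum>b<k'. (A\<^sup>T * M) $$ (i,b) * B $$ (b,j))"
    by (rule mult_entry[OF AM B i j])
  also have "\<dots> = (\<Sum>b<k'. (\<Sum>a<k. A $$ (a,i) * M $$ (a,b)) * B $$ (b,j))"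
    by (intro sum.cong refl, subst mult_entry[OF AT M i], insert A i, auto)
  also have "\<dots> = (\<Sum>b<k'. \<Sum>a<k. A $$ (a,i) * M $$ (a,b) * B $$ (b,j))"
    by (simp add: sum_distrib_right)
  also have "\<dots> = (\<Sum>a<k. \<Sum>b<k'. A $$ (a,i) * M $$ (a,b) * B $$ (b,j))"
    by (rule sum.swap)
  finally show ?thesis .
qed

lemma transp_entry:
  assumes "A \<in> carrier_mat k m" "B \<in> carrier_mat k n" "i < m" "j < n"
  shows "(A\<^sup>T * B) $$ (i,j) = (\<Sum>a<k. A $$ (a,i) * B $$ (a,j))"
  using assms by (subst mult_entry[of _ m k _ n], auto)

lemma real_eigvec:
  fixes M :: "real mat"
  assumes M: "M \<in> carrier_mat n n" and n: "n > 0"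
    and sym: "\<And>i j. i < n \<Longrightarrow> j < n \<Longrightarrow> M $$ (i,j) = M $$ (j,i)"
  shows "\<exists>e v. v \<in> carrier_vec n \<and> (\<Sum>i<n. (v $ i)\<^sup>2) = 1 \<and>
     (\<forall>i<n. (\<Sum>j<n. M $$ (i,j) * v $ j) = e * v $ i)"
proof -
  from real_eigen_exists[OF M n sym] obtain e where "poly (char_poly M) e = 0" by auto
  hence "eigenvalue M e" using eigenvalue_root_char_poly[OF M] by simp
  then obtain w where ev: "eigenvector M w e" unfolding eigenvalue_def by auto
  hence w: "w \<in> carrier_vec n" and w0: "w \<noteq> 0\<^sub>v n" and eq: "M *\<^sub>v w = e \<cdot>\<^sub>v w"
    using M unfolding eigenvector_def by auto
  from w0 w obtain i where i: "i < n" "w $ i \<noteq> 0" by (metis carrier_vecD eq_vecI index_zero_vec(1,2))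
  define N where "N = (\<Sum>i<n. (w $ i)\<^sup>2)"
  have Npos: "N > 0" unfolding N_def by (rule sum_pos2[of _ i], insert i, auto)
  define v where "v = vec n (\<lambda>i. w $ i / sqrt N)"
  have v: "v \<in> carrier_vec n" unfolding v_def by auto
  have "(\<Sum>i<n. (v $ i)\<^sup>2) = (\<Sum>i<n. (w $ i)\<^sup>2 / N)"
    unfolding v_def by (intro sum.cong refl, insert Npos, auto simp: power_divide)
  also have "\<dots> = 1" using Npos unfolding N_def[symmetric] sum_divide_distrib[symmetric] by simp
  finally have v1: "(\<Sum>i<n. (v $ i)\<^sup>2) = 1" .
  have "(\<Sum>j<n. M $$ (i,j) * v $ j) = e * v $ i" if i: "i < n" for i
  proof -
    have "(\<Sum>j<n. M $$ (i,j) * w $ j) = (M *\<^sub>v w) $ i"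
      using i M w by (auto simp: scalar_prod_def atLeast0LessThan)
    also have "\<dots> = e * w $ i" using eq i w by simp
    finally have *: "(\<Sum>j<n. M $$ (i,j) * w $ j) = e * w $ i" .
    have "(\<Sum>j<n. M $$ (i,j) * v $ j) = (\<Sum>j<n. M $$ (i,j) * w $ j) / sqrt N"
      unfolding v_def sum_divide_distrib by (intro sum.cong refl, auto)
    also have "\<dots> = e * v $ i" unfolding * v_def using i by simp
    finally show ?thesis .
  qed
  with v v1 show ?thesis by blast
qed

lemma sum_delta_mult: assumes "i < (n::nat)" shows "(\<Sum>k<n. (if k = i then 1 else 0) * f k) = (f i :: real)"
proof -
  have "(\<Sum>k<n. (if k = i then 1 else 0) * f k) = (\<Sum>k<n. if k = i then f k else 0)"
    by (rule sum.cong) auto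
  also have "\<dots> = f i" using assms by simp
  finally show ?thesis .
qed

lemma householder:
  fixes v :: "real vec"
  assumes v: "v \<in> carrier_vec n" and n: "n > 0" and v1: "(\<Sum>i<n. (v $ i)\<^sup>2) = 1"
  shows "\<exists>W. W \<in> carrier_mat n n \<and> W\<^sup>T * W = 1\<^sub>m n \<and> (\<forall>i<n. W $$ (i,0) = v $ i)"
proof (cases "v $ 0 = 1")
  case True
  from n obtain n' where n': "n = Suc n'" by (cases n) auto
  have "(\<Sum>i<n. (v $ i)\<^sup>2) = (v $ 0)\<^sup>2 + (\<Sum>i<n-1. (v $ Suc i)\<^sup>2)"
    unfolding n' sum.lessThan_Suc_shift by simp
  hence "(\<Sum>i<n-1. (v $ Suc i)\<^sup>2) = 0" using True v1 by simp
  hence z: "\<forall>i<n-1. (v $ Suc i)\<^sup>2 = 0" using sum_nonneg_eq_0_iff[of "{..<n-1}" "\<lambda>i. (v $ Suc i)\<^sup>2"] by simp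
  have "\<forall>i<n. (1\<^sub>m n :: real mat) $$ (i,0) = v $ i"
  proof (intro allI impI)
    fix i assume i: "i < n"
    show "(1\<^sub>m n :: real mat) $$ (i,0) = v $ i"
    proof (cases i)
      case 0 thus ?thesis using True n by simp
    next
      case (Suc i') thus ?thesis using z i n by auto
    qed
  qed
  thus ?thesis by (intro exI[of _ "1\<^sub>m n"], auto)
next
  case False
  define dl where "dl = (\<lambda>k i::nat. if k = i then 1 else (0::real))"
  have dl1: "(\<Sum>k<n. dl k i * f k) = f i" if "i < n" for i f
    unfolding dl_def using sum_delta_mult[OF that] .
  have dl2: "(\<Sum>k<n. dl k i * dl k j) = dl i j" if "i < n" for i j
    using dl1[OF that, of "\<lambda>k. dl k j"] by (simp add: dl_def)
  define u where "u = (\<lambda>i. v $ i - dl i 0)"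
  define s where "s = (\<Sum>i<n. (u i)\<^sup>2)"
  have "s = (\<Sum>i<n. (v $ i)\<^sup>2 - 2 * (dl i 0 * v $ i) + dl i 0 * dl i 0)"
    unfolding s_def u_def by (intro sum.cong refl, simp add: power2_eq_square dl_def algebra_simps)
  also have "\<dots> = (\<Sum>i<n. (v $ i)\<^sup>2) - 2 * (\<Sum>i<n. dl i 0 * v $ i) + (\<Sum>i<n. dl i 0 * dl i 0)"
    by (simp only: sum.distrib sum_subtractf sum_distrib_left)
  also have "\<dots> = 2 - 2 * v $ 0" unfolding v1 dl1[OF n] dl2[OF n] by (simp add: dl_def)
  finally have s: "s = 2 - 2 * v $ 0" .
  have v0le: "v $ 0 \<le> 1"
  proof -
    have "(v $ 0)\<^sup>2 \<le> (\<Sum>i<n. (v $ i)\<^sup>2)"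
      by (rule member_le_sum[of 0 _ "\<lambda>i. (v $ i)\<^sup>2"], insert n, auto)
    hence "(v $ 0)\<^sup>2 \<le> 1" using v1 by simp
    thus ?thesis by (metis abs_le_D1 abs_le_square_iff abs_one one_power2)
  qed
  have spos: "s > 0" using s v0le False by simp
  define c where "c = 2 / s"
  define W where "W = mat n n (\<lambda>(i,j). dl i j - c * u i * u j)"
  have W: "W \<in> carrier_mat n n" unfolding W_def by auto
  have "W\<^sup>T * W = 1\<^sub>m n"
  proof (rule eq_matI)
    fix i j assume i: "i < dim_row (1\<^sub>m n :: real mat)" and j: "j < dim_col (1\<^sub>m n :: real mat)"
    hence i: "i < n" and j: "j < n" by auto
    have "(W\<^sup>T * W) $$ (i,j) = (\<Sum>k<n. (dl k i - c * u k * u i) * (dl k j - c * u k * u j))"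
      by (subst transp_entry[OF W W i j], intro sum.cong refl, insert i j, simp add: W_def)
    also have "\<dots> = (\<Sum>k<n. dl k i * dl k j - (c * u j) * (dl k i * u k) - (c * u i) * (dl k j * u k)
       + (c * c * u i * u j) * (u k)\<^sup>2)"
      by (intro sum.cong refl) (simp add: power2_eq_square algebra_simps)
    also have "\<dots> = (\<Sum>k<n. dl k i * dl k j) - (c * u j) * (\<Sum>k<n. dl k i * u k) - (c * u i) * (\<Sum>k<n. dl k j * u k)
       + (c * c * u i * u j) * s"
      unfolding s_def by (simp only: sum.distrib sum_subtractf sum_distrib_left)
    also have "\<dots> = dl i j - 2 * c * u i * u j + c * c * s * u i * u j"
      unfolding dl1[OF i] dl1[OF j] dl2[OF i] by (simp add: algebra_simps)
    also have "c * c * s = 2 * c" unfolding c_def using spos by (simp add: power2_eq_square)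
    also have "dl i j - 2 * c * u i * u j + 2 * c * u i * u j = dl i j" by simp
    also have "\<dots> = 1\<^sub>m n $$ (i,j)" using i j by (simp add: dl_def)
    finally show "(W\<^sup>T * W) $$ (i,j) = 1\<^sub>m n $$ (i,j)" .
  qed (insert W, auto)
  moreover have "\<forall>i<n. W $$ (i,0) = v $ i"
  proof (intro allI impI)
    fix i assume i: "i < n"
    have u0: "u 0 = v $ 0 - 1" unfolding u_def dl_def by simp
    have "W $$ (i,0) = dl i 0 - (2 / (2 - 2 * v $ 0)) * u i * (v $ 0 - 1)"
      unfolding W_def c_def using i n s u0 by simp
    also have "(2 / (2 - 2 * v $ 0)) * u i * (v $ 0 - 1) = - u i" using spos s by (simp add: field_simps)
    also have "dl i 0 - - u i = v $ i" unfolding u_def by simp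
    finally show "W $$ (i,0) = v $ i" .
  qed
  ultimately show ?thesis using W by blast
qed

lemma spectral:
  fixes M :: "real mat"
  assumes "M \<in> carrier_mat n n" "\<forall>i<n. \<forall>j<n. M $$ (i,j) = M $$ (j,i)"
  shows "\<exists>Q ls. Q \<in> carrier_mat n n \<and> Q\<^sup>T * Q = 1\<^sub>m n \<and> length ls = n \<and>
     (\<forall>i<n. \<forall>j<n. (Q\<^sup>T * M * Q) $$ (i,j) = (if i = j then ls ! i else 0))"
  using assms
proof (induction n arbitrary: M)
  case 0
  show ?case by (intro exI[of _ "1\<^sub>m 0"] exI[of _ "[]"], auto)
next
  case (Suc n' M)
  define n where "n = Suc n'"
  have M: "M \<in> carrier_mat n n" using Suc.prems n_def by auto
  have sym: "\<And>i j. i < n \<Longrightarrow> j < n \<Longrightarrow> M $$ (i,j) = M $$ (j,i)" using Suc.prems n_def by auto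
  have n0: "n > 0" unfolding n_def by simp
  from real_eigvec[OF M n0 sym] obtain e v where v: "v \<in> carrier_vec n"
    and v1: "(\<Sum>i<n. (v $ i)\<^sup>2) = 1" and ev: "\<And>i. i < n \<Longrightarrow> (\<Sum>j<n. M $$ (i,j) * v $ j) = e * v $ i"
    by blast
  from householder[OF v n0 v1] obtain W where W: "W \<in> carrier_mat n n" and WW: "W\<^sup>T * W = 1\<^sub>m n"
    and W0: "\<And>i. i < n \<Longrightarrow> W $$ (i,0) = v $ i" by blast
  define A' where "A' = W\<^sup>T * M * W"
  have A': "A' \<in> carrier_mat n n" unfolding A'_def using W M by auto
  have A'ent: "A' $$ (i,j) = (\<Sum>a<n. \<Sum>b<n. W $$ (a,i) * M $$ (a,b) * W $$ (b,j))"
    if "i < n" "j < n" for i j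
    unfolding A'_def by (rule triple_entry[OF W M W that])
  have A'sym: "A' $$ (i,j) = A' $$ (j,i)" if ij: "i < n" "j < n" for i j
  proof -
    have "A' $$ (i,j) = (\<Sum>b<n. \<Sum>a<n. W $$ (a,i) * M $$ (a,b) * W $$ (b,j))"
      unfolding A'ent[OF ij] by (rule sum.swap)
    also have "\<dots> = A' $$ (j,i)" unfolding A'ent[OF ij(2,1)]
      by (intro sum.cong refl, simp add: sym mult_ac)
    finally show ?thesis .
  qed
  have A'col0: "A' $$ (i,0) = (if i = 0 then e else 0)" if i: "i < n" for i
  proof -
    have "A' $$ (i,0) = (\<Sum>a<n. W $$ (a,i) * (\<Sum>b<n. M $$ (a,b) * v $ b))"
      unfolding A'ent[OF i n0] by (intro sum.cong refl, simp add: sum_distrib_left W0 mult_ac)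
    also have "\<dots> = (\<Sum>a<n. W $$ (a,i) * (e * W $$ (a,0)))"
      by (intro sum.cong refl, simp add: ev W0)
    also have "\<dots> = e * (W\<^sup>T * W) $$ (i,0)"
      by (subst transp_entry[OF W W i n0], simp add: sum_distrib_left mult_ac)
    also have "\<dots> = (if i = 0 then e else 0)" unfolding WW using i n0 by simp
    finally show ?thesis .
  qed
  define A3 where "A3 = mat n' n' (\<lambda>(i,j). A' $$ (Suc i, Suc j))"
  have A3: "A3 \<in> carrier_mat n' n'" unfolding A3_def by auto
  have A3sym: "\<forall>i<n'. \<forall>j<n'. A3 $$ (i,j) = A3 $$ (j,i)"
    unfolding A3_def using A'sym n_def by auto
  from Suc.IH[OF A3 A3sym] obtain Q' ls' where Q': "Q' \<in> carrier_mat n' n'"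
    and QQ': "Q'\<^sup>T * Q' = 1\<^sub>m n'" and ls': "length ls' = n'"
    and D': "\<And>i j. i < n' \<Longrightarrow> j < n' \<Longrightarrow> (Q'\<^sup>T * A3 * Q') $$ (i,j) = (if i = j then ls' ! i else 0)"
    by blast
  define Q1 where "Q1 = mat n n (\<lambda>(i,j). if i = 0 then (if j = 0 then 1 else 0)
     else if j = 0 then 0 else Q' $$ (i - 1, j - 1))"
  have Q1: "Q1 \<in> carrier_mat n n" unfolding Q1_def by auto
  have Q1e: "Q1 $$ (0,0) = 1" "\<And>j. j < n' \<Longrightarrow> Q1 $$ (0, Suc j) = 0"
    "\<And>a. a < n' \<Longrightarrow> Q1 $$ (Suc a, 0) = 0"
    "\<And>a j. a < n' \<Longrightarrow> j < n' \<Longrightarrow> Q1 $$ (Suc a, Suc j) = Q' $$ (a,j)"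
    unfolding Q1_def n_def by auto
  have split: "(\<Sum>a<n. f a) = f 0 + (\<Sum>a<n'. f (Suc a))" for f :: "nat \<Rightarrow> real"
    unfolding n_def by (rule sum.lessThan_Suc_shift)
  define Q where "Q = W * Q1"
  have Q: "Q \<in> carrier_mat n n" unfolding Q_def using W Q1 by auto
  have QtQ: "Q\<^sup>T * Q = Q1\<^sup>T * Q1"
  proof -
    have "Q\<^sup>T * Q = (Q1\<^sup>T * W\<^sup>T) * (W * Q1)" unfolding Q_def
      by (subst transpose_mult[OF W Q1], simp)
    also have "\<dots> = Q1\<^sup>T * ((W\<^sup>T * W) * Q1)" using W Q1
      by (simp add: assoc_mult_mat[of _ n n _ n _ n])
    also have "\<dots> = Q1\<^sup>T * Q1" unfolding WW using Q1 by simp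
    finally show ?thesis .
  qed
  have QMQ: "Q\<^sup>T * M * Q = Q1\<^sup>T * A' * Q1"
  proof -
    have "Q\<^sup>T * M * Q = (Q1\<^sup>T * W\<^sup>T) * M * (W * Q1)" unfolding Q_def
      by (subst transpose_mult[OF W Q1], simp)
    also have "\<dots> = Q1\<^sup>T * (W\<^sup>T * M * W) * Q1" using W Q1 M
      by (simp add: assoc_mult_mat[of _ n n _ n _ n])
    finally show ?thesis unfolding A'_def .
  qed
  have "Q\<^sup>T * Q = 1\<^sub>m n"
  proof (rule eq_matI)
    fix i j assume "i < dim_row (1\<^sub>m n :: real mat)" "j < dim_col (1\<^sub>m n :: real mat)"
    hence i: "i < n" and j: "j < n" by auto
    have "(Q\<^sup>T * Q) $$ (i,j) = (\<Sum>a<n. Q1 $$ (a,i) * Q1 $$ (a,j))"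
      unfolding QtQ by (rule transp_entry[OF Q1 Q1 i j])
    also have "\<dots> = 1\<^sub>m n $$ (i,j)"
    proof (cases i)
      case 0
      show ?thesis
      proof (cases j)
        case 0 thus ?thesis using \<open>i = 0\<close> unfolding split by (simp add: Q1e n0)
      next
        case (Suc j') thus ?thesis using \<open>i = 0\<close> j unfolding split by (simp add: Q1e n_def)
      qed
    next
      case (Suc i')
      show ?thesis
      proof (cases j)
        case 0 thus ?thesis using Suc i unfolding split by (simp add: Q1e n_def)
      next
        case (Suc j')
        have "(\<Sum>a<n'. Q' $$ (a,i') * Q' $$ (a,j')) = (Q'\<^sup>T * Q') $$ (i',j')"
          using i j \<open>i = Suc i'\<close> Suc n_def by (subst transp_entry[OF Q' Q'], auto)
        thus ?thesis using \<open>i = Suc i'\<close> Suc i j unfolding split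
          by (simp add: Q1e QQ' n_def)
      qed
    qed
    finally show "(Q\<^sup>T * Q) $$ (i,j) = 1\<^sub>m n $$ (i,j)" .
  qed (insert Q, auto)
  moreover have "\<forall>i<n. \<forall>j<n. (Q\<^sup>T * M * Q) $$ (i,j) = (if i = j then (e # ls') ! i else 0)"
  proof (intro allI impI)
    fix i j assume i: "i < n" and j: "j < n"
    have "(Q\<^sup>T * M * Q) $$ (i,j) = (\<Sum>a<n. \<Sum>b<n. Q1 $$ (a,i) * A' $$ (a,b) * Q1 $$ (b,j))"
      unfolding QMQ by (rule triple_entry[OF Q1 A' Q1 i j])
    also have "\<dots> = (if i = j then (e # ls') ! i else 0)"
    proof (cases i)
      case 0
      have r0: "A' $$ (0, Suc b) = 0" if "b < n'" for b
        using A'sym[of 0 "Suc b"] A'col0[of "Suc b"] that n_def by auto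
      show ?thesis
      proof (cases j)
        case 0 thus ?thesis using \<open>i = 0\<close> unfolding split by (simp add: Q1e A'col0 n0 r0)
      next
        case (Suc j') thus ?thesis using \<open>i = 0\<close> j unfolding split by (simp add: Q1e r0 A'col0[unfolded n_def] n_def)
      qed
    next
      case (Suc i')
      show ?thesis
      proof (cases j)
        case 0 thus ?thesis using Suc i unfolding split by (simp add: Q1e A'col0[unfolded n_def] n_def)
      next
        case (Suc j')
        have "(\<Sum>a<n'. \<Sum>b<n'. Q' $$ (a,i') * A3 $$ (a,b) * Q' $$ (b,j')) = (Q'\<^sup>T * A3 * Q') $$ (i',j')"
          using i j \<open>i = Suc i'\<close> Suc n_def by (subst triple_entry[OF Q' A3 Q'], auto)
        also have "\<dots> = (if i' = j' then ls' ! i' else 0)"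
          using D' i j \<open>i = Suc i'\<close> Suc n_def by auto
        finally have *: "(\<Sum>a<n'. \<Sum>b<n'. Q' $$ (a,i') * A3 $$ (a,b) * Q' $$ (b,j')) =
           (if i' = j' then ls' ! i' else 0)" .
        have r0: "A' $$ (0, Suc b) = 0" if "b < n'" for b
          using A'sym[of 0 "Suc b"] A'col0[of "Suc b"] that n_def by auto
        have A3e: "A3 $$ (a,b) = A' $$ (Suc a, Suc b)" if "a < n'" "b < n'" for a b
          using that unfolding A3_def by auto
        show ?thesis using \<open>i = Suc i'\<close> Suc i j * unfolding split
          by (simp add: n_def Q1e A'col0[unfolded n_def] r0 A3e)
      qed
    qed
    finally show "(Q\<^sup>T * M * Q) $$ (i,j) = (if i = j then (e # ls') ! i else 0)" .
  qed
  ultimately show ?case using Q ls' unfolding n_def by (intro exI[of _ Q] exI[of _ "e # ls'"], auto)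
qed

lemma order_prod_linear:
  fixes ls :: "real list"
  shows "order x (\<Prod>a\<leftarrow>ls. [:- a, 1:]) = count_list ls x"
proof (induction ls)
  case Nil thus ?case by simp
next
  case (Cons a ls)
  have nz: "(\<Prod>a\<leftarrow>ls. [:- a, 1:]) \<noteq> 0"
    by (subst prod_list_zero_iff, auto)
  have "order x (\<Prod>a\<leftarrow>a # ls. [:- a, 1:]) = order x [:- a, 1:] + order x (\<Prod>a\<leftarrow>ls. [:- a, 1:])"
  proof -
    have eq: "(\<Prod>a\<leftarrow>a # ls. [:- a, 1:]) = [:- a, 1:] * (\<Prod>a\<leftarrow>ls. [:- a, 1:])" by simp
    have lin: "[:- a, 1:] \<noteq> (0 :: real poly)" by simp
    show ?thesis unfolding eq by (rule order_mult, rule no_zero_divisors[OF lin nz])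
  qed
  thus ?case using Cons by (simp add: order_linear')
qed

lemma roots_prod_linear:
  fixes ls :: "real list"
  shows "{x. poly (\<Prod>a\<leftarrow>ls. [:- a, 1:]) x = 0} = set ls"
  by (auto simp: poly_prod_list prod_list_zero_iff o_def)

lemma sum_list_count_real:
  fixes f :: "'a \<Rightarrow> real"
  shows "sum_list (map f xs) = (\<Sum>x\<in>set xs. real (count_list xs x) * f x)"
proof (induction xs)
  case Nil thus ?case by simp
next
  case (Cons a xs)
  have "(\<Sum>x\<in>set (a # xs). real (count_list (a # xs) x) * f x)
     = (\<Sum>x\<in>insert a (set xs). real (count_list xs x) * f x + (if a = x then f x else 0))"
    by (intro sum.cong refl, auto simp: algebra_simps)
  also have "\<dots> = (\<Sum>x\<in>insert a (set xs). real (count_list xs x) * f x) + f a"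
    by (simp add: sum.distrib)
  also have "(\<Sum>x\<in>insert a (set xs). real (count_list xs x) * f x) = (\<Sum>x\<in>set xs. real (count_list xs x) * f x)"
    by (simp add: sum.insert_if count_list_0_iff)
  finally show ?case using Cons by simp
qed

lemma nuc_sum_prod:
  fixes ls :: "real list"
  shows "(\<Sum>x\<in>{x. poly (\<Prod>a\<leftarrow>ls. [:- a, 1:]) x = 0}. real (order x (\<Prod>a\<leftarrow>ls. [:- a, 1:])) * sqrt x)
     = sum_list (map sqrt ls)"
  unfolding roots_prod_linear order_prod_linear by (rule sum_list_count_real[symmetric])

definition dotp :: "nat \<Rightarrow> (nat \<Rightarrow> real) \<Rightarrow> (nat \<Rightarrow> real) \<Rightarrow> real" where
  "dotp m x y = (\<Sum>r<m. x r * y r)"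

definition nrm :: "nat \<Rightarrow> (nat \<Rightarrow> real) \<Rightarrow> real" where
  "nrm m x = sqrt (dotp m x x)"

lemma dotp_self_nonneg: "dotp m x x \<ge> 0"
  unfolding dotp_def by (rule sum_nonneg, simp)

lemma nrm_nonneg: "nrm m x \<ge> 0"
  unfolding nrm_def by (rule real_sqrt_ge_zero[OF dotp_self_nonneg])

lemma nrm_sq: "(nrm m x)\<^sup>2 = dotp m x x"
  unfolding nrm_def using dotp_self_nonneg by simp

lemma dotp_comm: "dotp m x y = dotp m y x"
  unfolding dotp_def by (simp add: mult.commute)

lemma cs_sum:
  fixes a b :: "'i \<Rightarrow> real"
  shows "(\<Sum>i\<in>I. a i * b i)\<^sup>2 \<le> (\<Sum>i\<in>I. (a i)\<^sup>2) * (\<Sum>i\<in>I. (b i)\<^sup>2)"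
proof -
  have "0 \<le> (\<Sum>i\<in>I. \<Sum>j\<in>I. (a i * b j - a j * b i)\<^sup>2)"
    by (intro sum_nonneg, simp)
  also have "\<dots> = (\<Sum>i\<in>I. \<Sum>j\<in>I. (a i)\<^sup>2 * (b j)\<^sup>2) - 2 * (\<Sum>i\<in>I. \<Sum>j\<in>I. (a i * b i) * (a j * b j))
      + (\<Sum>i\<in>I. \<Sum>j\<in>I. (a j)\<^sup>2 * (b i)\<^sup>2)"
    by (simp add: sum.distrib sum_subtractf sum_distrib_left power2_eq_square algebra_simps)
  also have "(\<Sum>i\<in>I. \<Sum>j\<in>I. (a j)\<^sup>2 * (b i)\<^sup>2) = (\<Sum>i\<in>I. \<Sum>j\<in>I. (a i)\<^sup>2 * (b j)\<^sup>2)"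
    by (rule sum.swap)
  also have "(\<Sum>i\<in>I. \<Sum>j\<in>I. (a i)\<^sup>2 * (b j)\<^sup>2) = (\<Sum>i\<in>I. (a i)\<^sup>2) * (\<Sum>i\<in>I. (b i)\<^sup>2)"
    by (simp add: sum_product)
  also have "(\<Sum>i\<in>I. \<Sum>j\<in>I. (a i * b i) * (a j * b j)) = (\<Sum>i\<in>I. a i * b i)\<^sup>2"
    by (simp add: sum_product power2_eq_square)
  finally show ?thesis by simp
qed

lemma cs_sqrt:
  fixes a b :: "'i \<Rightarrow> real"
  shows "(\<Sum>i\<in>I. a i * b i) \<le> sqrt (\<Sum>i\<in>I. (a i)\<^sup>2) * sqrt (\<Sum>i\<in>I. (b i)\<^sup>2)"
proof -
  have "(\<Sum>i\<in>I. a i * b i) \<le> sqrt ((\<Sum>i\<in>I. a i * b i)\<^sup>2)" by simp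
  also have "\<dots> \<le> sqrt ((\<Sum>i\<in>I. (a i)\<^sup>2) * (\<Sum>i\<in>I. (b i)\<^sup>2))"
    by (rule real_sqrt_le_mono[OF cs_sum])
  finally show ?thesis by (simp add: real_sqrt_mult)
qed

lemma dotp_cs_sq: "(dotp m x y)\<^sup>2 \<le> dotp m x x * dotp m y y"
  unfolding dotp_def using cs_sum[of x y "{..<m}"] by (simp add: power2_eq_square)

lemma dotp_cs: "dotp m x y \<le> nrm m x * nrm m y"
  unfolding nrm_def dotp_def using cs_sqrt[of x y "{..<m}"] by (simp add: power2_eq_square)

lemma sum_single:
  assumes "finite A" "i \<in> A" "\<And>k. k \<in> A \<Longrightarrow> k \<noteq> i \<Longrightarrow> g k = (0::real)"
  shows "sum g A = g i"
proof -
  have "sum g A = g i + sum g (A - {i})" using assms by (simp add: sum.remove)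
  also have "sum g (A - {i}) = 0" using assms by (intro sum.neutral) auto
  finally show ?thesis by simp
qed

lemma bessel:
  fixes N :: nat and w :: "nat \<Rightarrow> nat \<Rightarrow> real"
  assumes orth: "\<And>i k. i < N \<Longrightarrow> k < N \<Longrightarrow> i \<noteq> k \<Longrightarrow> dotp m (w i) (w k) = 0"
    and le1: "\<And>i. i < N \<Longrightarrow> dotp m (w i) (w i) \<le> 1"
  shows "(\<Sum>i<N. (dotp m (w i) x)\<^sup>2) \<le> dotp m x x"
proof -
  define a where "a i = dotp m (w i) x" for i
  define S where "S = (\<Sum>i<N. (a i)\<^sup>2)"
  define z where "z r = (\<Sum>i<N. a i * w i r)" for r
  have zx: "dotp m z x = S"
  proof -
    have "dotp m z x = (\<Sum>r<m. \<Sum>i<N. a i * (w i r * x r))"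
      unfolding dotp_def z_def sum_distrib_right by (simp add: mult_ac)
    also have "\<dots> = (\<Sum>i<N. a i * (\<Sum>r<m. w i r * x r))"
      by (subst sum.swap, simp add: sum_distrib_left)
    also have "\<dots> = S" unfolding S_def a_def dotp_def by (simp add: power2_eq_square)
    finally show ?thesis .
  qed
  have zz: "dotp m z z \<le> S"
  proof -
    have "dotp m z z = (\<Sum>r<m. \<Sum>i<N. \<Sum>k<N. a i * a k * (w i r * w k r))"
      unfolding dotp_def z_def sum_product by (simp add: mult_ac)
    also have "\<dots> = (\<Sum>i<N. \<Sum>k<N. a i * a k * dotp m (w i) (w k))"
    proof -
      have "(\<Sum>r<m. \<Sum>i<N. \<Sum>k<N. a i * a k * (w i r * w k r)) = (\<Sum>i<N. \<Sum>r<m. \<Sum>k<N. a i * a k * (w i r * w k r))"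
        by (rule sum.swap)
      also have "\<dots> = (\<Sum>i<N. \<Sum>k<N. \<Sum>r<m. a i * a k * (w i r * w k r))"
        by (rule sum.cong[OF refl], rule sum.swap)
      finally show ?thesis unfolding dotp_def sum_distrib_left .
    qed
    also have "\<dots> = (\<Sum>i<N. a i * a i * dotp m (w i) (w i))"
      by (intro sum.cong refl sum_single, auto simp: orth)
    also have "\<dots> \<le> (\<Sum>i<N. a i * a i * 1)"
      by (intro sum_mono mult_left_mono le1, auto)
    also have "\<dots> = S" unfolding S_def by (simp add: power2_eq_square)
    finally show ?thesis .
  qed
  have S0: "S \<ge> 0" unfolding S_def by (intro sum_nonneg, simp)
  have "S * S \<le> S * dotp m x x"
  proof -
    have "S * S = (dotp m z x)\<^sup>2" using zx by (simp add: power2_eq_square)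
    also have "\<dots> \<le> dotp m z z * dotp m x x" by (rule dotp_cs_sq)
    also have "\<dots> \<le> S * dotp m x x" by (rule mult_right_mono[OF zz dotp_self_nonneg])
    finally show ?thesis .
  qed
  hence "S \<le> dotp m x x" using S0 dotp_self_nonneg[of m x]
    by (cases "S = 0", simp, simp add: mult_le_cancel_left)
  thus ?thesis unfolding S_def a_def .
qed

lemma nuc_spec:
  fixes A :: "real mat"
  assumes A: "A \<in> carrier_mat m n"
  shows "\<exists>Q. Q \<in> carrier_mat n n \<and> Q\<^sup>T * Q = 1\<^sub>m n \<and> Q * Q\<^sup>T = 1\<^sub>m n \<and>
    (\<forall>i<n. \<forall>j<n. i \<noteq> j \<longrightarrow> dotp m (\<lambda>r. (A * Q) $$ (r,i)) (\<lambda>r. (A * Q) $$ (r,j)) = 0) \<and>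
    nuc_norm A = (\<Sum>i<n. nrm m (\<lambda>r. (A * Q) $$ (r,i)))"
proof -
  define M where "M = A\<^sup>T * A"
  have M: "M \<in> carrier_mat n n" unfolding M_def using A by auto
  have Ment: "M $$ (i,j) = (\<Sum>a<m. A $$ (a,i) * A $$ (a,j))" if "i < n" "j < n" for i j
    unfolding M_def by (rule transp_entry[OF A A that])
  have sym: "\<forall>i<n. \<forall>j<n. M $$ (i,j) = M $$ (j,i)"
    using Ment by (simp add: mult.commute)
  from spectral[OF M sym] obtain Q ls where Q: "Q \<in> carrier_mat n n" and QtQ: "Q\<^sup>T * Q = 1\<^sub>m n"
    and ls: "length ls = n"
    and D: "\<And>i j. i < n \<Longrightarrow> j < n \<Longrightarrow> (Q\<^sup>T * M * Q) $$ (i,j) = (if i = j then ls ! i else 0)"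
    by blast
  have Qt: "Q\<^sup>T \<in> carrier_mat n n" using Q by auto
  have QQt: "Q * Q\<^sup>T = 1\<^sub>m n" by (rule mat_mult_left_right_inverse[OF Qt Q QtQ])
  define G where "G = A * Q"
  have G: "G \<in> carrier_mat m n" unfolding G_def using A Q by auto
  have GtG: "G\<^sup>T * G = Q\<^sup>T * M * Q"
  proof -
    have "G\<^sup>T * G = (Q\<^sup>T * A\<^sup>T) * (A * Q)" unfolding G_def by (subst transpose_mult[OF A Q], simp)
    also have "\<dots> = Q\<^sup>T * (A\<^sup>T * (A * Q))" using A Q
      by (intro assoc_mult_mat[of _ n n _ m _ n], auto)
    also have "A\<^sup>T * (A * Q) = (A\<^sup>T * A) * Q" using A Q
      by (intro assoc_mult_mat[of _ n m _ n _ n, symmetric], auto)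
    also have "Q\<^sup>T * ((A\<^sup>T * A) * Q) = Q\<^sup>T * (A\<^sup>T * A) * Q" using A Q
      by (intro assoc_mult_mat[of _ n n _ n _ n, symmetric], auto)
    finally show ?thesis unfolding M_def .
  qed
  have Gdot: "dotp m (\<lambda>r. G $$ (r,i)) (\<lambda>r. G $$ (r,j)) = (if i = j then ls ! i else 0)"
    if ij: "i < n" "j < n" for i j
  proof -
    have "dotp m (\<lambda>r. G $$ (r,i)) (\<lambda>r. G $$ (r,j)) = (G\<^sup>T * G) $$ (i,j)"
      unfolding dotp_def by (rule transp_entry[OF G G ij, symmetric])
    also have "\<dots> = (if i = j then ls ! i else 0)" unfolding GtG by (rule D[OF ij])
    finally show ?thesis .
  qed
  define DD where "DD = Q\<^sup>T * M * Q"
  have DD: "DD \<in> carrier_mat n n" unfolding DD_def using Q M by auto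
  have ut: "upper_triangular DD" unfolding upper_triangular_def using DD D DD_def by auto
  have diag: "diag_mat DD = ls"
    by (rule nth_equalityI, insert DD ls D, auto simp: diag_mat_def DD_def)
  have sim: "similar_mat M DD"
  proof -
    have "Q * DD * Q\<^sup>T = (Q * Q\<^sup>T) * M * (Q * Q\<^sup>T)" unfolding DD_def using Q M
      by (simp add: assoc_mult_mat[of _ n n _ n _ n])
    also have "\<dots> = M" unfolding QQt using M by simp
    finally have "M = Q * DD * Q\<^sup>T" by simp
    hence "similar_mat_wit M DD Q Q\<^sup>T"
      unfolding similar_mat_wit_def Let_def using M DD Q Qt QQt QtQ by auto
    thus ?thesis unfolding similar_mat_def by blast
  qed
  have cp: "char_poly M = (\<Prod>a\<leftarrow>ls. [:- a, 1:])"
    using char_poly_similar[OF sim] char_poly_upper_triangular[OF DD ut] diag by simp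
  have "nuc_norm A = sum_list (map sqrt ls)"
    unfolding nuc_norm_def Let_def M_def[symmetric] cp by (rule nuc_sum_prod)
  also have "\<dots> = (\<Sum>i<n. sqrt (ls ! i))"
    by (subst sum_list_sum_nth, simp add: ls atLeast0LessThan)
  also have "\<dots> = (\<Sum>i<n. nrm m (\<lambda>r. G $$ (r,i)))"
    unfolding nrm_def by (intro sum.cong refl, simp add: Gdot)
  finally have nuc: "nuc_norm A = (\<Sum>i<n. nrm m (\<lambda>r. G $$ (r,i)))" .
  show ?thesis using Q QtQ QQt Gdot nuc unfolding G_def by (intro exI[of _ Q], auto)
qed


lemma nuc_decomp:
  fixes A :: "real mat"
  assumes A: "A \<in> carrier_mat m n"
  shows "\<exists>x y. (\<forall>r<m. \<forall>c<n. A $$ (r,c) = (\<Sum>j<n. x j r * y j c)) \<and>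
     (\<Sum>j<n. nrm m (x j) * nrm n (y j)) = nuc_norm A"
proof -
  from nuc_spec[OF A] obtain Q where Q: "Q \<in> carrier_mat n n" and QtQ: "Q\<^sup>T * Q = 1\<^sub>m n"
    and QQt: "Q * Q\<^sup>T = 1\<^sub>m n" and nuc: "nuc_norm A = (\<Sum>i<n. nrm m (\<lambda>r. (A * Q) $$ (r,i)))"
    by blast
  define x where "x j = (\<lambda>r. (A * Q) $$ (r,j))" for j
  define y where "y j = (\<lambda>c. Q $$ (c,j))" for j
  have AQ: "A * Q \<in> carrier_mat m n" using A Q by auto
  have Qt: "Q\<^sup>T \<in> carrier_mat n n" using Q by auto
  have "A = A * (Q * Q\<^sup>T)" unfolding QQt using A by simp
  also have "\<dots> = (A * Q) * Q\<^sup>T" using A Q by (intro assoc_mult_mat[symmetric, of _ m n _ n _ n], auto)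
  finally have Aeq: "A = (A * Q) * Q\<^sup>T" .
  have ent: "A $$ (r,c) = (\<Sum>j<n. x j r * y j c)" if "r < m" "c < n" for r c
  proof -
    have "A $$ (r,c) = ((A * Q) * Q\<^sup>T) $$ (r,c)" using Aeq by simp
    also have "\<dots> = (\<Sum>j<n. (A * Q) $$ (r,j) * Q\<^sup>T $$ (j,c))"
      by (rule mult_entry[OF AQ Qt that])
    also have "\<dots> = (\<Sum>j<n. x j r * y j c)"
      unfolding x_def y_def using Q that by (intro sum.cong refl, auto)
    finally show ?thesis .
  qed
  have ny: "nrm n (y j) = 1" if "j < n" for j
  proof -
    have "dotp n (y j) (y j) = (Q\<^sup>T * Q) $$ (j,j)"
      unfolding dotp_def y_def by (rule transp_entry[OF Q Q that that, symmetric])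
    thus ?thesis unfolding nrm_def QtQ using that by simp
  qed
  have "(\<Sum>j<n. nrm m (x j) * nrm n (y j)) = nuc_norm A"
    unfolding nuc x_def by (intro sum.cong refl, simp add: ny)
  with ent show ?thesis by blast
qed

lemma dotp_div: "dotp m (\<lambda>r. x r / c) y = dotp m x y / c"
  unfolding dotp_def by (simp add: sum_divide_distrib)

lemma dotp_div2: "dotp m x (\<lambda>r. y r / c) = dotp m x y / c"
  unfolding dotp_def by (simp add: sum_divide_distrib)

lemma nuc_le:
  fixes A :: "real mat" and x y :: "'i \<Rightarrow> nat \<Rightarrow> real"
  assumes A: "A \<in> carrier_mat m n" and F: "finite F"
    and ent: "\<forall>r<m. \<forall>c<n. A $$ (r,c) = (\<Sum>j\<in>F. x j r * y j c)"
  shows "nuc_norm A \<le> (\<Sum>j\<in>F. nrm m (x j) * nrm n (y j))"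
proof -
  from nuc_spec[OF A] obtain Q where Q: "Q \<in> carrier_mat n n" and QtQ: "Q\<^sup>T * Q = 1\<^sub>m n"
    and orth: "\<And>i j. i < n \<Longrightarrow> j < n \<Longrightarrow> i \<noteq> j \<Longrightarrow> dotp m (\<lambda>r. (A * Q) $$ (r,i)) (\<lambda>r. (A * Q) $$ (r,j)) = 0"
    and nuc: "nuc_norm A = (\<Sum>i<n. nrm m (\<lambda>r. (A * Q) $$ (r,i)))"
    by blast
  define g where "g i = (\<lambda>r. (A * Q) $$ (r,i))" for i
  define q where "q i = (\<lambda>c. Q $$ (c,i))" for i
  define u where "u i = (\<lambda>r. g i r / nrm m (g i))" for i
  have gent: "g i r = (\<Sum>j\<in>F. x j r * dotp n (y j) (q i))" if "r < m" "i < n" for r i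
  proof -
    have "g i r = (\<Sum>c<n. A $$ (r,c) * Q $$ (c,i))"
      unfolding g_def by (rule mult_entry[OF A Q that])
    also have "\<dots> = (\<Sum>c<n. \<Sum>j\<in>F. x j r * y j c * Q $$ (c,i))"
      using ent that by (simp add: sum_distrib_right)
    also have "\<dots> = (\<Sum>j\<in>F. \<Sum>c<n. x j r * (y j c * Q $$ (c,i)))"
      by (subst sum.swap, simp add: mult_ac)
    also have "\<dots> = (\<Sum>j\<in>F. x j r * dotp n (y j) (q i))"
      unfolding dotp_def q_def by (simp add: sum_distrib_left)
    finally show ?thesis .
  qed
  have ng: "nrm m (g i) = dotp m (u i) (g i)" for i
  proof -
    have "dotp m (u i) (g i) = dotp m (g i) (g i) / nrm m (g i)" unfolding u_def by (rule dotp_div)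
    also have "\<dots> = (nrm m (g i))\<^sup>2 / nrm m (g i)" by (simp add: nrm_sq)
    also have "\<dots> = nrm m (g i)" by (simp add: power2_eq_square)
    finally show ?thesis by simp
  qed
  have ug: "dotp m (u i) (g i) = (\<Sum>j\<in>F. dotp m (u i) (x j) * dotp n (y j) (q i))" if "i < n" for i
  proof -
    have "dotp m (u i) (g i) = (\<Sum>r<m. u i r * (\<Sum>j\<in>F. x j r * dotp n (y j) (q i)))"
      unfolding dotp_def[of m "u i"] using gent that by (intro sum.cong refl) auto
    also have "\<dots> = (\<Sum>r<m. \<Sum>j\<in>F. u i r * x j r * dotp n (y j) (q i))"
      by (simp only: sum_distrib_left mult.assoc)
    also have "\<dots> = (\<Sum>j\<in>F. \<Sum>r<m. u i r * x j r * dotp n (y j) (q i))"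
      by (rule sum.swap)
    also have "\<dots> = (\<Sum>j\<in>F. dotp m (u i) (x j) * dotp n (y j) (q i))"
      by (simp only: dotp_def[of m] sum_distrib_right)
    finally show ?thesis .
  qed
  have uorth: "dotp m (u i) (u k) = 0" if "i < n" "k < n" "i \<noteq> k" for i k
    unfolding u_def dotp_div dotp_div2 using orth[OF that] unfolding g_def by simp
  have u1: "dotp m (u i) (u i) \<le> 1" for i
  proof -
    have "dotp m (u i) (u i) = dotp m (g i) (g i) / nrm m (g i) / nrm m (g i)"
      unfolding u_def dotp_div dotp_div2 ..
    also have "\<dots> = (nrm m (g i))\<^sup>2 / (nrm m (g i))\<^sup>2" unfolding nrm_sq[symmetric] by (simp add: power2_eq_square)
    also have "\<dots> \<le> 1" by (cases "nrm m (g i) = 0", auto)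
    finally show ?thesis .
  qed
  have qorth: "dotp n (q i) (q k) = (if i = k then 1 else 0)" if "i < n" "k < n" for i k
  proof -
    have "dotp n (q i) (q k) = (Q\<^sup>T * Q) $$ (i,k)"
      unfolding dotp_def q_def by (rule transp_entry[OF Q Q that, symmetric])
    thus ?thesis unfolding QtQ using that by simp
  qed
  have "nuc_norm A = (\<Sum>i<n. \<Sum>j\<in>F. dotp m (u i) (x j) * dotp n (y j) (q i))"
    unfolding nuc g_def[symmetric] by (intro sum.cong refl, simp add: ng ug)
  also have "\<dots> = (\<Sum>j\<in>F. \<Sum>i<n. dotp m (u i) (x j) * dotp n (q i) (y j))"
    by (subst sum.swap, simp add: dotp_comm[of n "y _"])
  also have "\<dots> \<le> (\<Sum>j\<in>F. sqrt (\<Sum>i<n. (dotp m (u i) (x j))\<^sup>2) * sqrt (\<Sum>i<n. (dotp n (q i) (y j))\<^sup>2))"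
    by (intro sum_mono cs_sqrt)
  also have "\<dots> \<le> (\<Sum>j\<in>F. nrm m (x j) * nrm n (y j))"
  proof (intro sum_mono mult_mono)
    fix j
    show "sqrt (\<Sum>i<n. (dotp m (u i) (x j))\<^sup>2) \<le> nrm m (x j)"
      unfolding nrm_def by (intro real_sqrt_le_mono bessel, auto simp: uorth u1)
    show "sqrt (\<Sum>i<n. (dotp n (q i) (y j))\<^sup>2) \<le> nrm n (y j)"
      unfolding nrm_def by (intro real_sqrt_le_mono bessel, auto simp: qorth)
  qed (auto simp: nrm_nonneg sum_nonneg)
  finally show ?thesis .
qed

lemma nrm_scale: "nrm m (\<lambda>r. a * x r) = \<bar>a\<bar> * nrm m x"
proof -
  have "dotp m (\<lambda>r. a * x r) (\<lambda>r. a * x r) = a\<^sup>2 * dotp m x x"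
    unfolding dotp_def by (simp add: sum_distrib_left power2_eq_square mult_ac)
  thus ?thesis unfolding nrm_def by (simp add: real_sqrt_mult)
qed

lemma abs_dotp: "\<bar>dotp m x y\<bar> \<le> nrm m x * nrm m y"
proof -
  have "\<bar>dotp m x y\<bar> = sqrt ((dotp m x y)\<^sup>2)" by simp
  also have "\<dots> \<le> sqrt (dotp m x x * dotp m y y)" by (rule real_sqrt_le_mono[OF dotp_cs_sq])
  finally show ?thesis unfolding nrm_def by (simp add: real_sqrt_mult)
qed

lemma nuc_nonneg: "nuc_norm (A :: real mat) \<ge> 0"
proof -
  have A: "A \<in> carrier_mat (dim_row A) (dim_col A)" by auto
  from nuc_decomp[OF A] obtain x y where "(\<Sum>j<dim_col A. nrm (dim_row A) (x j) * nrm (dim_col A) (y j)) = nuc_norm A"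
    by blast
  moreover have "(\<Sum>j<dim_col A. nrm (dim_row A) (x j) * nrm (dim_col A) (y j)) \<ge> 0"
    by (intro sum_nonneg mult_nonneg_nonneg nrm_nonneg)
  ultimately show ?thesis by simp
qed

lemma nuc_zero: "nuc_norm (0\<^sub>m m n :: real mat) \<le> 0"
  using nuc_le[of "0\<^sub>m m n" m n "{} :: nat set" "\<lambda>_ _. 0" "\<lambda>_ _. 0"] by auto

lemma nuc_add:
  fixes A B :: "real mat"
  assumes A: "A \<in> carrier_mat m n" and B: "B \<in> carrier_mat m n"
  shows "nuc_norm (A + B) \<le> nuc_norm A + nuc_norm B"
proof -
  from nuc_decomp[OF A] obtain x1 y1 where e1: "\<forall>r<m. \<forall>c<n. A $$ (r,c) = (\<Sum>j<n. x1 j r * y1 j c)"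
    and c1: "(\<Sum>j<n. nrm m (x1 j) * nrm n (y1 j)) = nuc_norm A" by blast
  from nuc_decomp[OF B] obtain x2 y2 where e2: "\<forall>r<m. \<forall>c<n. B $$ (r,c) = (\<Sum>j<n. x2 j r * y2 j c)"
    and c2: "(\<Sum>j<n. nrm m (x2 j) * nrm n (y2 j)) = nuc_norm B" by blast
  define x where "x = (\<lambda>(b::bool, j). if b then x1 j else x2 j)"
  define y where "y = (\<lambda>(b::bool, j). if b then y1 j else y2 j)"
  have split: "(\<Sum>p\<in>UNIV \<times> {..<n}. f p) = (\<Sum>j<n. f (True, j)) + (\<Sum>j<n. f (False, j))" for f :: "bool \<times> nat \<Rightarrow> real"
  proof -
    have "(\<Sum>b\<in>UNIV. \<Sum>j<n. f (b,j)) = (\<Sum>p\<in>UNIV \<times> {..<n}. f p)"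
      by (subst sum.cartesian_product, simp)
    moreover have "(\<Sum>b\<in>UNIV. \<Sum>j<n. f (b,j)) = (\<Sum>j<n. f (True, j)) + (\<Sum>j<n. f (False, j))"
      by (simp add: UNIV_bool)
    ultimately show ?thesis by simp
  qed
  have AB: "A + B \<in> carrier_mat m n" using A B by auto
  have "nuc_norm (A + B) \<le> (\<Sum>p\<in>UNIV \<times> {..<n}. nrm m (x p) * nrm n (y p))"
  proof (rule nuc_le[OF AB])
    show "\<forall>r<m. \<forall>c<n. (A + B) $$ (r,c) = (\<Sum>p\<in>UNIV \<times> {..<n}. x p r * y p c)"
      unfolding split using e1 e2 A B by (simp add: x_def y_def)
  qed simp
  also have "\<dots> = nuc_norm A + nuc_norm B" unfolding split c1[symmetric] c2[symmetric]
    by (simp add: x_def y_def)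
  finally show ?thesis .
qed

lemma nuc_smult:
  fixes A :: "real mat"
  assumes A: "A \<in> carrier_mat m n"
  shows "nuc_norm (a \<cdot>\<^sub>m A) \<le> \<bar>a\<bar> * nuc_norm A"
proof -
  from nuc_decomp[OF A] obtain x y where e: "\<forall>r<m. \<forall>c<n. A $$ (r,c) = (\<Sum>j<n. x j r * y j c)"
    and c: "(\<Sum>j<n. nrm m (x j) * nrm n (y j)) = nuc_norm A" by blast
  have aA: "a \<cdot>\<^sub>m A \<in> carrier_mat m n" using A by auto
  have "nuc_norm (a \<cdot>\<^sub>m A) \<le> (\<Sum>j<n. nrm m (\<lambda>r. a * x j r) * nrm n (y j))"
    by (rule nuc_le[OF aA], insert e A, auto simp: sum_distrib_left mult_ac)
  also have "\<dots> = \<bar>a\<bar> * nuc_norm A" unfolding c[symmetric] nrm_scale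
    by (simp add: sum_distrib_left mult_ac)
  finally show ?thesis .
qed

lemma nuc_mask:
  fixes Z :: "real mat"
  shows "nuc_norm (mat (dim_row Z) (dim_col Z) (\<lambda>(r,c). if P c then Z $$ (r,c) else 0)) \<le> nuc_norm Z"
proof -
  define m where "m = dim_row Z"
  define n where "n = dim_col Z"
  have Z: "Z \<in> carrier_mat m n" unfolding m_def n_def by auto
  from nuc_decomp[OF Z] obtain x y where e: "\<forall>r<m. \<forall>c<n. Z $$ (r,c) = (\<Sum>j<n. x j r * y j c)"
    and c: "(\<Sum>j<n. nrm m (x j) * nrm n (y j)) = nuc_norm Z" by blast
  define y' where "y' j = (\<lambda>c. if P c then y j c else 0)" for j
  have Z': "mat m n (\<lambda>(r,c). if P c then Z $$ (r,c) else 0) \<in> carrier_mat m n" by auto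
  have "nuc_norm (mat m n (\<lambda>(r,c). if P c then Z $$ (r,c) else 0)) \<le> (\<Sum>j<n. nrm m (x j) * nrm n (y' j))"
    by (rule nuc_le[OF Z'], insert e, auto simp: y'_def)
  also have "\<dots> \<le> (\<Sum>j<n. nrm m (x j) * nrm n (y j))"
  proof (intro sum_mono mult_left_mono nrm_nonneg)
    fix j
    show "nrm n (y' j) \<le> nrm n (y j)" unfolding nrm_def dotp_def y'_def
      by (intro real_sqrt_le_mono sum_mono, auto)
  qed
  finally have "nuc_norm (mat m n (\<lambda>(r,c). if P c then Z $$ (r,c) else 0)) \<le> nuc_norm Z" using c by simp
  thus ?thesis unfolding m_def n_def .
qed

lemma nuc_mult:
  fixes B Y :: "real mat"
  assumes B: "B \<in> carrier_mat p q" and Y: "Y \<in> carrier_mat q n"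
  shows "nuc_norm (B * Y) \<le> nuc_norm B * nuc_norm Y"
proof -
  from nuc_decomp[OF B] obtain x y where e1: "\<forall>r<p. \<forall>c<q. B $$ (r,c) = (\<Sum>j<q. x j r * y j c)"
    and c1: "(\<Sum>j<q. nrm p (x j) * nrm q (y j)) = nuc_norm B" by blast
  from nuc_decomp[OF Y] obtain z w where e2: "\<forall>r<q. \<forall>c<n. Y $$ (r,c) = (\<Sum>k<n. z k r * w k c)"
    and c2: "(\<Sum>k<n. nrm q (z k) * nrm n (w k)) = nuc_norm Y" by blast
  define x' where "x' = (\<lambda>(j,k). (\<lambda>r. dotp q (y j) (z k) * x j r))"
  define w' where "w' = (\<lambda>(j::nat,k::nat). w k)"
  have BY: "B * Y \<in> carrier_mat p n" using B Y by auto
  have "nuc_norm (B * Y) \<le> (\<Sum>jk\<in>{..<q} \<times> {..<n}. nrm p (x' jk) * nrm n (w' jk))"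
  proof (rule nuc_le[OF BY])
    show "\<forall>r<p. \<forall>c<n. (B * Y) $$ (r,c) = (\<Sum>jk\<in>{..<q} \<times> {..<n}. x' jk r * w' jk c)"
    proof (intro allI impI)
      fix r c assume r: "r < p" and c: "c < n"
      have "(B * Y) $$ (r,c) = (\<Sum>s<q. B $$ (r,s) * Y $$ (s,c))" by (rule mult_entry[OF B Y r c])
      also have "\<dots> = (\<Sum>s<q. (\<Sum>j<q. x j r * y j s) * (\<Sum>k<n. z k s * w k c))"
        using e1 e2 r c by simp
      also have "\<dots> = (\<Sum>s<q. \<Sum>j<q. \<Sum>k<n. (x j r * y j s) * (z k s * w k c))"
        by (simp only: sum_product)
      also have "\<dots> = (\<Sum>s<q. \<Sum>j<q. \<Sum>k<n. x j r * w k c * (y j s * z k s))"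
        by (simp add: mult_ac)
      also have "\<dots> = (\<Sum>j<q. \<Sum>s<q. \<Sum>k<n. x j r * w k c * (y j s * z k s))"
        by (rule sum.swap)
      also have "\<dots> = (\<Sum>j<q. \<Sum>k<n. \<Sum>s<q. x j r * w k c * (y j s * z k s))"
        by (rule sum.cong[OF refl], rule sum.swap)
      also have "\<dots> = (\<Sum>j<q. \<Sum>k<n. x' (j,k) r * w' (j,k) c)"
        unfolding x'_def w'_def dotp_def by (simp add: sum_distrib_left mult_ac)
      also have "\<dots> = (\<Sum>jk\<in>{..<q} \<times> {..<n}. x' jk r * w' jk c)"
        by (subst sum.cartesian_product, simp)
      finally show "(B * Y) $$ (r,c) = (\<Sum>jk\<in>{..<q} \<times> {..<n}. x' jk r * w' jk c)" .
    qed
  qed simp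
  also have "\<dots> = (\<Sum>j<q. \<Sum>k<n. \<bar>dotp q (y j) (z k)\<bar> * nrm p (x j) * nrm n (w k))"
    by (subst sum.cartesian_product, rule sum.cong, auto simp: x'_def w'_def nrm_scale)
  also have "\<dots> \<le> (\<Sum>j<q. \<Sum>k<n. (nrm q (y j) * nrm q (z k)) * nrm p (x j) * nrm n (w k))"
    by (intro sum_mono mult_right_mono abs_dotp nrm_nonneg)
  also have "\<dots> = nuc_norm B * nuc_norm Y" unfolding c1[symmetric] c2[symmetric] sum_product
    by (intro sum.cong refl) (simp add: mult_ac)
  finally show ?thesis .
qed

lemma sum_lt_mono_nat: "(a::nat) \<le> b \<Longrightarrow> (\<Sum>i<a. f i) \<le> (\<Sum>i<b. (f i :: nat))"
  by (rule sum_mono2, auto)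

lemma in_block_unique:
  assumes "in_block nj j c" "in_block nj j' c" shows "j = j'"
proof (rule ccontr)
  assume "j \<noteq> j'"
  hence "j < j' \<or> j' < j" by auto
  thus False
  proof
    assume "j < j'"
    hence "(\<Sum>i<Suc j. nj i) \<le> (\<Sum>i<j'. nj i)" by (intro sum_lt_mono_nat) simp
    thus False using assms unfolding in_block_def by simp
  next
    assume "j' < j"
    hence "(\<Sum>i<Suc j'. nj i) \<le> (\<Sum>i<j. nj i)" by (intro sum_lt_mono_nat) simp
    thus False using assms unfolding in_block_def by simp
  qed
qed

lemma in_block_exists:
  "c < (\<Sum>j<J. nj j) \<Longrightarrow> \<exists>j<J. in_block nj j c"
proof (induction J)
  case 0 thus ?case by simp
next
  case (Suc J)
  show ?case
  proof (cases "c < (\<Sum>j<J. nj j)")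
    case True thus ?thesis using Suc.IH by (meson less_SucI)
  next
    case False
    hence "in_block nj J c" using Suc.prems unfolding in_block_def by simp
    thus ?thesis by blast
  qed
qed

lemma md_entry:
  assumes "r < dim_row Z" "c < dim_col Z" "jc < J" "in_block nj jc c"
  shows "mod_data J nj C i Z $$ (r,c) = (if C jc i = 1 then Z $$ (r,c) else 0)"
proof -
  have "(\<exists>j<J. in_block nj j c \<and> C j i = 1) \<longleftrightarrow> C jc i = 1"
    using assms in_block_unique[of nj _ c jc] by blast
  thus ?thesis unfolding mod_data_def using assms by simp
qed

lemma md_entry01:
  assumes "r < dim_row Z" "c < dim_col Z" "jc < J" "in_block nj jc c" "C jc i \<in> {0,1}"
  shows "mod_data J nj C i Z $$ (r,c) = real (C jc i) * Z $$ (r,c)"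
  using md_entry[OF assms(1-4)] assms(5) by auto

lemma md_dims[simp]: "dim_row (mod_data J nj C i Z) = dim_row Z" "dim_col (mod_data J nj C i Z) = dim_col Z"
  unfolding mod_data_def by auto

lemma md_carrier: "Z \<in> carrier_mat a b \<Longrightarrow> mod_data J nj C i Z \<in> carrier_mat a b"
  unfolding mod_data_def by auto

lemma nuc_md: "nuc_norm (mod_data J nj C i Z) \<le> nuc_norm Z"
  unfolding mod_data_def by (rule nuc_mask)

lemma sum_if_subset:
  assumes "finite A" "I \<subseteq> A"
  shows "(\<Sum>i\<in>A. if i \<in> I then f i else (0::real)) = sum f I"
proof -
  have "(\<Sum>i\<in>A. if i \<in> I then f i else 0) = sum f (A \<inter> I)"
    by (simp add: sum.inter_restrict[OF assms(1)] )
  thus ?thesis using assms(2) by (simp add: Int_absorb1)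
qed

lemma sum_if_eq:
  assumes "(k::nat) < K"
  shows "(\<Sum>i<K. if i = k then f i else (0::real)) = f k"
  using assms by simp

lemma obj_le:
  assumes res: "\<forall>r<p. \<forall>c<n. (\<Sum>k<K. (B' k * mod_data J nj CY k Y) $$ (r,c)) + (\<Sum>l<L. S' l $$ (r,c))
        = (\<Sum>k<K. (B k * mod_data J nj CY k Y) $$ (r,c)) + (\<Sum>l<L. S l $$ (r,c))"
    and pen: "(\<Sum>k<K. lamB k * nuc_norm (B' k)) + (\<Sum>l<L. lamS l * nuc_norm (S' l))
       \<le> (\<Sum>k<K. lamB k * nuc_norm (B k)) + (\<Sum>l<L. lamS l * nuc_norm (S l))"
  shows "obj p n J nj K L CY X Y lamB lamS B' S' \<le> obj p n J nj K L CY X Y lamB lamS B S"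
proof -
  have eqm: "mat p n (\<lambda>(r,c). X $$ (r,c) - (\<Sum>k<K. (B' k * mod_data J nj CY k Y) $$ (r,c)) - (\<Sum>l<L. S' l $$ (r,c)))
      = mat p n (\<lambda>(r,c). X $$ (r,c) - (\<Sum>k<K. (B k * mod_data J nj CY k Y) $$ (r,c)) - (\<Sum>l<L. S l $$ (r,c)))"
  proof (rule eq_matI)
    fix i j assume "i < dim_row (mat p n (\<lambda>(r,c). X $$ (r,c) - (\<Sum>k<K. (B k * mod_data J nj CY k Y) $$ (r,c)) - (\<Sum>l<L. S l $$ (r,c))))"
      "j < dim_col (mat p n (\<lambda>(r,c). X $$ (r,c) - (\<Sum>k<K. (B k * mod_data J nj CY k Y) $$ (r,c)) - (\<Sum>l<L. S l $$ (r,c))))"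
    hence ij: "i < p" "j < n" by auto
    show "mat p n (\<lambda>(r,c). X $$ (r,c) - (\<Sum>k<K. (B' k * mod_data J nj CY k Y) $$ (r,c)) - (\<Sum>l<L. S' l $$ (r,c))) $$ (i,j)
      = mat p n (\<lambda>(r,c). X $$ (r,c) - (\<Sum>k<K. (B k * mod_data J nj CY k Y) $$ (r,c)) - (\<Sum>l<L. S l $$ (r,c))) $$ (i,j)"
      using ij res by (simp add: algebra_simps)
  qed auto
  show ?thesis unfolding obj_def eqm using pen by linarith
qed

lemma minimizer_transfer:
  assumes "is_minimizer p q n J nj K L CY CS X Y lamB lamS B S"
    and "feasible p q n J nj K L CS B' S'"
    and "obj p n J nj K L CY X Y lamB lamS B' S' \<le> obj p n J nj K L CY X Y lamB lamS B S"
  shows "is_minimizer p q n J nj K L CY CS X Y lamB lamS B' S'"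
  using assms unfolding is_minimizer_def by (meson order_trans)

lemma sum_two:
  assumes "finite A" "a \<in> A" "b \<in> A" "a \<noteq> b"
  shows "sum h A = h a + h b + sum h (A - {a} - {b})"
proof -
  have "sum h A = h a + sum h (A - {a})" using assms by (simp add: sum.remove)
  also have "sum h (A - {a}) = h b + sum h (A - {a} - {b})" using assms by (simp add: sum.remove)
  finally show ?thesis by (simp add: add.assoc)
qed

lemma part1:
  fixes B :: "nat \<Rightarrow> real mat" and c :: nat
  assumes k: "k < K" and I: "I \<subseteq> {..<K} - {k}" and c: "c > 0"
    and CYsum: "\<forall>j<J. (\<Sum>i\<in>I. CY j i) = c * CY j k"
    and lamk: "lamB k \<ge> (\<Sum>i\<in>I. lamB i) / real c"
    and lampos: "\<forall>k<K. lamB k > 0"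
    and CY01: "\<forall>j<J. \<forall>k<K. CY j k \<in> {0,1}"
    and n: "n = (\<Sum>j<J. nj j)" and Y: "Y \<in> carrier_mat q n"
    and min: "is_minimizer p q n J nj K L CY CS X Y lamB lamS B S"
  shows "\<exists>B' S'. is_minimizer p q n J nj K L CY CS X Y lamB lamS B' S' \<and>
             obj p n J nj K L CY X Y lamB lamS B' S' \<le> obj p n J nj K L CY X Y lamB lamS B S \<and>
             B' k = 0\<^sub>m p q"
proof -
  have feas: "feasible p q n J nj K L CS B S" using min unfolding is_minimizer_def by auto
  hence Bc: "\<And>i. i < K \<Longrightarrow> B i \<in> carrier_mat p q" unfolding feasible_def by auto
  have Bk: "B k \<in> carrier_mat p q" using Bc k by auto
  have finI: "finite I" using I finite_subset by blast
  have kI: "k \<notin> I" using I by auto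
  have IK: "I \<subseteq> {..<K}" using I by auto
  define B' where "B' i = (if i \<in> I then B i + (1 / real c) \<cdot>\<^sub>m B k else if i = k then 0\<^sub>m p q else B i)" for i
  have B'k: "B' k = 0\<^sub>m p q" unfolding B'_def using kI by simp
  have feas': "feasible p q n J nj K L CS B' S"
    using feas Bc Bk unfolding feasible_def B'_def by auto
  define Yi where "Yi i = mod_data J nj CY i Y" for i
  have Yi: "Yi i \<in> carrier_mat q n" for i unfolding Yi_def using md_carrier[OF Y] .
  have res: "\<forall>r<p. \<forall>col<n. (\<Sum>i<K. (B' i * Yi i) $$ (r,col)) + (\<Sum>l<L. S l $$ (r,col))
        = (\<Sum>i<K. (B i * Yi i) $$ (r,col)) + (\<Sum>l<L. S l $$ (r,col))"
  proof (intro allI impI)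
    fix r col assume r: "r < p" and col: "col < n"
    from in_block_exists[of col nj J] col n obtain jc where jc: "jc < J" "in_block nj jc col" by auto
    define t where "t = (\<Sum>s<q. B k $$ (r,s) * Y $$ (s,col))"
    define e where "e i = (B i * Yi i) $$ (r,col)" for i
    define d where "d i = (B k * Yi i) $$ (r,col)" for i
    have Yient: "Yi i $$ (s,col) = real (CY jc i) * Y $$ (s,col)" if "i < K" "s < q" for i s
      unfolding Yi_def by (rule md_entry01, insert that Y col jc CY01, auto)
    have d: "d i = real (CY jc i) * t" if "i < K" for i
    proof -
      have "d i = (\<Sum>s<q. B k $$ (r,s) * Yi i $$ (s,col))" unfolding d_def
        by (rule mult_entry[OF Bk Yi r col])
      also have "\<dots> = real (CY jc i) * t" unfolding t_def sum_distrib_left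
        by (intro sum.cong refl, simp add: Yient that)
      finally show ?thesis .
    qed
    have e': "(B' i * Yi i) $$ (r,col) = e i + (if i \<in> I then d i / real c else 0) - (if i = k then e k else 0)"
      if i: "i < K" for i
    proof (cases "i \<in> I")
      case True
      have Bi: "B i \<in> carrier_mat p q" using Bc i by auto
      have B'i: "B' i = B i + (1 / real c) \<cdot>\<^sub>m B k" using True by (simp add: B'_def)
      have "(B' i * Yi i) $$ (r,col) = (\<Sum>s<q. (B i + (1 / real c) \<cdot>\<^sub>m B k) $$ (r,s) * Yi i $$ (s,col))"
        unfolding B'i by (rule mult_entry[OF _ Yi r col], insert Bi Bk, auto)
      also have "\<dots> = (\<Sum>s<q. B i $$ (r,s) * Yi i $$ (s,col)) + (\<Sum>s<q. B k $$ (r,s) * Yi i $$ (s,col)) / real c"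
        using Bi Bk r by (simp add: sum.distrib sum_divide_distrib algebra_simps)
      also have "\<dots> = e i + d i / real c" unfolding e_def d_def
        using mult_entry[OF Bi Yi r col] mult_entry[OF Bk Yi r col] by simp
      finally show ?thesis using True kI by auto
    next
      case False
      show ?thesis
      proof (cases "i = k")
        case True
        have "(B' i * Yi i) $$ (r,col) = (0\<^sub>m p q * Yi i) $$ (r,col)" unfolding B'_def using False True by simp
        also have "\<dots> = 0" using Yi[of i] r col by simp
        finally show ?thesis using False True by simp
      next
        case False2: False
        show ?thesis unfolding B'_def e_def using False False2 by simp
      qed
    qed
    have "(\<Sum>i<K. (B' i * Yi i) $$ (r,col)) = (\<Sum>i<K. e i + (if i \<in> I then d i / real c else 0) - (if i = k then e k else 0))"
      by (rule sum.cong, auto simp: e')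
    also have "\<dots> = (\<Sum>i<K. e i) + (\<Sum>i\<in>I. d i / real c) - e k"
      using IK k by (simp add: sum.distrib sum_subtractf sum_if_subset[OF finite_lessThan IK])
    also have "(\<Sum>i\<in>I. d i / real c) = (\<Sum>i\<in>I. real (CY jc i)) * t / real c"
      using I by (simp add: sum_divide_distrib sum_distrib_right d subset_iff)
    also have "(\<Sum>i\<in>I. real (CY jc i)) = real c * real (CY jc k)"
      using CYsum jc by (metis of_nat_mult of_nat_sum)
    also have "real c * real (CY jc k) * t / real c = e k"
      using c d[OF k] unfolding e_def d_def by simp
    finally show "(\<Sum>i<K. (B' i * Yi i) $$ (r,col)) + (\<Sum>l<L. S l $$ (r,col))
        = (\<Sum>i<K. (B i * Yi i) $$ (r,col)) + (\<Sum>l<L. S l $$ (r,col))" unfolding e_def by simp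
  qed
  have pen: "(\<Sum>i<K. lamB i * nuc_norm (B' i)) \<le> (\<Sum>i<K. lamB i * nuc_norm (B i))"
  proof -
    have each: "lamB i * nuc_norm (B' i) \<le> lamB i * nuc_norm (B i)
       + (if i \<in> I then lamB i * nuc_norm (B k) / real c else 0) - (if i = k then lamB k * nuc_norm (B k) else 0)"
      if i: "i < K" for i
    proof (cases "i \<in> I")
      case True
      have Bi: "B i \<in> carrier_mat p q" using Bc i by auto
      have "nuc_norm (B' i) \<le> nuc_norm (B i) + nuc_norm ((1 / real c) \<cdot>\<^sub>m B k)"
        unfolding B'_def using True by (simp add: nuc_add[OF Bi] Bk)
      also have "nuc_norm ((1 / real c) \<cdot>\<^sub>m B k) \<le> nuc_norm (B k) / real c"
        using nuc_smult[OF Bk, of "1 / real c"] c by simp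
      finally have "nuc_norm (B' i) \<le> nuc_norm (B i) + nuc_norm (B k) / real c" by simp
      hence "lamB i * nuc_norm (B' i) \<le> lamB i * (nuc_norm (B i) + nuc_norm (B k) / real c)"
        using lampos i by (intro mult_left_mono, auto)
      moreover have "i \<noteq> k" using True kI by auto
      ultimately show ?thesis using True by (simp add: algebra_simps)
    next
      case False
      show ?thesis
      proof (cases "i = k")
        case True
        have lk: "lamB k > 0" using lampos k by auto
        have "lamB i * nuc_norm (B' i) = lamB k * nuc_norm (0\<^sub>m p q)" unfolding B'_def using False True by simp
        also have "\<dots> \<le> 0" using lk nuc_zero[of p q] by (intro mult_nonneg_nonpos) auto
        finally have "lamB i * nuc_norm (B' i) \<le> 0" .
        thus ?thesis using False True by simp
      next
        case False2: False
        show ?thesis unfolding B'_def using False False2 by simp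
      qed
    qed
    have "(\<Sum>i<K. lamB i * nuc_norm (B' i)) \<le> (\<Sum>i<K. lamB i * nuc_norm (B i)
       + (if i \<in> I then lamB i * nuc_norm (B k) / real c else 0) - (if i = k then lamB k * nuc_norm (B k) else 0))"
      by (rule sum_mono, simp add: each)
    also have "\<dots> = (\<Sum>i<K. lamB i * nuc_norm (B i)) + (\<Sum>i\<in>I. lamB i) / real c * nuc_norm (B k) - lamB k * nuc_norm (B k)"
      using IK k by (simp add: sum.distrib sum_subtractf sum_if_subset[OF finite_lessThan IK] sum_divide_distrib sum_distrib_right)
    also have "\<dots> \<le> (\<Sum>i<K. lamB i * nuc_norm (B i))"
      using mult_right_mono[OF lamk nuc_nonneg[of "B k"]] by simp
    finally show ?thesis .
  qed
  have "obj p n J nj K L CY X Y lamB lamS B' S \<le> obj p n J nj K L CY X Y lamB lamS B S"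
    by (rule obj_le, insert res pen, auto simp: Yi_def)
  moreover from minimizer_transfer[OF min feas' this]
  have "is_minimizer p q n J nj K L CY CS X Y lamB lamS B' S" .
  ultimately show ?thesis using B'k by blast
qed

lemma part2:
  fixes B S :: "nat \<Rightarrow> real mat" and c :: nat
  assumes k: "k < K" and IL: "I \<subseteq> {..<L}" and c: "c > 0"
    and CSsum: "\<forall>j<J. (\<Sum>i\<in>I. CS j i) = c * CY j k"
    and lamk: "lamB k \<ge> (\<Sum>i\<in>I. lamS i * nuc_norm (mod_data J nj CY k Y)) / real c"
    and lampos: "\<forall>k<K. lamB k > 0" and lamSpos: "\<forall>l<L. lamS l > 0"
    and CY01: "\<forall>j<J. \<forall>k<K. CY j k \<in> {0,1}"
    and CS01: "\<forall>j<J. \<forall>l<L. CS j l \<in> {0,1}"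
    and n: "n = (\<Sum>j<J. nj j)" and Y: "Y \<in> carrier_mat q n"
    and min: "is_minimizer p q n J nj K L CY CS X Y lamB lamS B S"
  shows "\<exists>B' S'. is_minimizer p q n J nj K L CY CS X Y lamB lamS B' S' \<and>
             obj p n J nj K L CY X Y lamB lamS B' S' \<le> obj p n J nj K L CY X Y lamB lamS B S \<and>
             B' k = 0\<^sub>m p q"
proof -
  have feas: "feasible p q n J nj K L CS B S" using min unfolding is_minimizer_def by auto
  hence Bc: "\<And>i. i < K \<Longrightarrow> B i \<in> carrier_mat p q" unfolding feasible_def by auto
  have Bk: "B k \<in> carrier_mat p q" using Bc k by auto
  have Sset: "\<And>i. i < L \<Longrightarrow> S i \<in> S_set p n J nj CS i" using feas unfolding feasible_def by auto
  have Sc: "\<And>i. i < L \<Longrightarrow> S i \<in> carrier_mat p n" using Sset unfolding S_set_def by auto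
  have finI: "finite I" using IL finite_subset by blast
  define Yk where "Yk = mod_data J nj CY k Y"
  have Yk: "Yk \<in> carrier_mat q n" unfolding Yk_def using md_carrier[OF Y] .
  define Md where "Md i = mod_data J nj CS i Yk" for i
  have Md: "Md i \<in> carrier_mat q n" for i unfolding Md_def using md_carrier[OF Yk] .
  define P where "P i = B k * Md i" for i
  have P: "P i \<in> carrier_mat p n" for i unfolding P_def using Bk Md[of i] by auto
  define B' where "B' = B(k := 0\<^sub>m p q)"
  have B'k: "B' k = 0\<^sub>m p q" unfolding B'_def by simp
  define S' where "S' i = (if i \<in> I then S i + (1 / real c) \<cdot>\<^sub>m P i else S i)" for i
  have Pzero: "P i $$ (r,col) = 0" if "j < J" "CS j i = 0" "r < p" "col < n" "in_block nj j col" for i j r col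
  proof -
    have "P i $$ (r,col) = (\<Sum>s<q. B k $$ (r,s) * Md i $$ (s,col))" unfolding P_def
      by (rule mult_entry[OF Bk Md that(3,4)])
    also have "\<dots> = 0" using that Yk unfolding Md_def
      by (intro sum.neutral ballI, subst md_entry[of _ Yk col j J], auto)
    finally show ?thesis .
  qed
  have S'set: "S' i \<in> S_set p n J nj CS i" if i: "i < L" for i
  proof (cases "i \<in> I")
    case True
    have Si: "S i \<in> carrier_mat p n" using Sc i by auto
    show ?thesis unfolding S_set_def
    proof (intro CollectI conjI allI impI)
      show "S' i \<in> carrier_mat p n" unfolding S'_def using True Si P[of i] by auto
      fix j r col assume j: "j < J" and z: "CS j i = 0" and r: "r < p" and col: "col < n" and b: "in_block nj j col"
      have "S i $$ (r,col) = 0" using Sset[OF i] j z r col b unfolding S_set_def by auto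
      moreover have "P i $$ (r,col) = 0" by (rule Pzero[OF j z r col b])
      ultimately show "S' i $$ (r,col) = 0" unfolding S'_def using True Si P[of i] r col by simp
    qed
  next
    case False
    thus ?thesis unfolding S'_def using Sset[OF i] by auto
  qed
  have feas': "feasible p q n J nj K L CS B' S'"
    using feas S'set Bc unfolding feasible_def B'_def by auto
  have res: "\<forall>r<p. \<forall>col<n. (\<Sum>i<K. (B' i * mod_data J nj CY i Y) $$ (r,col)) + (\<Sum>i<L. S' i $$ (r,col))
        = (\<Sum>i<K. (B i * mod_data J nj CY i Y) $$ (r,col)) + (\<Sum>i<L. S i $$ (r,col))"
  proof (intro allI impI)
    fix r col assume r: "r < p" and col: "col < n"
    from in_block_exists[of col nj J] col n obtain jc where jc: "jc < J" "in_block nj jc col" by auto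
    define e where "e i = (B i * mod_data J nj CY i Y) $$ (r,col)" for i
    define f where "f i = S i $$ (r,col)" for i
    define g where "g i = P i $$ (r,col)" for i
    have ek: "e k = (\<Sum>s<q. B k $$ (r,s) * Yk $$ (s,col))" unfolding e_def Yk_def
      by (rule mult_entry[OF Bk _ r col], insert Y, rule md_carrier)
    have g: "g i = real (CS jc i) * e k" if "i < L" for i
    proof -
      have "g i = (\<Sum>s<q. B k $$ (r,s) * Md i $$ (s,col))" unfolding g_def P_def
        by (rule mult_entry[OF Bk Md r col])
      also have "\<dots> = (\<Sum>s<q. B k $$ (r,s) * (real (CS jc i) * Yk $$ (s,col)))"
        unfolding Md_def by (intro sum.cong refl, subst md_entry01, insert that Yk col jc CS01, auto)
      also have "\<dots> = real (CS jc i) * e k" unfolding ek sum_distrib_left by (simp add: mult_ac)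
      finally show ?thesis .
    qed
    have ekk: "real (CY jc k) * e k = e k"
    proof (cases "CY jc k = 0")
      case True
      have "e k = 0" unfolding ek Yk_def
        by (intro sum.neutral ballI, subst md_entry[of _ Y col jc J], insert Y col jc True, auto)
      thus ?thesis by simp
    next
      case False
      moreover have "CY jc k \<in> {0,1}" using CY01 jc k by blast
      ultimately have "CY jc k = 1" by auto
      thus ?thesis by simp
    qed
    have e': "(B' i * mod_data J nj CY i Y) $$ (r,col) = e i - (if i = k then e k else 0)" for i
    proof (cases "i = k")
      case True
      have "(B' i * mod_data J nj CY i Y) $$ (r,col) = (0\<^sub>m p q * mod_data J nj CY k Y) $$ (r,col)"
        unfolding B'_def using True by simp
      also have "\<dots> = (\<Sum>s<q. (0\<^sub>m p q :: real mat) $$ (r,s) * mod_data J nj CY k Y $$ (s,col))"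
        by (rule mult_entry[OF _ md_carrier[OF Y] r col], simp)
      also have "\<dots> = 0" using r by simp
      finally show ?thesis using True by simp
    qed (simp add: B'_def e_def)
    have f': "S' i $$ (r,col) = f i + (if i \<in> I then g i / real c else 0)" if i: "i < L" for i
    proof (cases "i \<in> I")
      case True
      have Si: "S i \<in> carrier_mat p n" using Sc i by auto
      show ?thesis unfolding S'_def f_def g_def using True Si P[of i] r col by simp
    qed (simp add: S'_def f_def)
    have "(\<Sum>i<K. (B' i * mod_data J nj CY i Y) $$ (r,col)) = (\<Sum>i<K. e i) - e k"
      unfolding e' using k by (simp add: sum_subtractf)
    moreover have "(\<Sum>i<L. S' i $$ (r,col)) = (\<Sum>i<L. f i) + (\<Sum>i\<in>I. g i / real c)"
    proof -
      have "(\<Sum>i<L. S' i $$ (r,col)) = (\<Sum>i<L. f i + (if i \<in> I then g i / real c else 0))"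
        by (rule sum.cong, auto simp: f')
      also have "\<dots> = (\<Sum>i<L. f i) + (\<Sum>i\<in>I. g i / real c)"
        by (simp add: sum.distrib sum_if_subset[OF finite_lessThan IL])
      finally show ?thesis .
    qed
    moreover have "(\<Sum>i\<in>I. g i / real c) = e k"
    proof -
      have "(\<Sum>i\<in>I. g i / real c) = (\<Sum>i\<in>I. real (CS jc i)) * e k / real c"
        using IL by (simp add: sum_divide_distrib sum_distrib_right g subset_iff)
      also have "(\<Sum>i\<in>I. real (CS jc i)) = real c * real (CY jc k)"
        using CSsum jc by (metis of_nat_mult of_nat_sum)
      also have "real c * real (CY jc k) * e k / real c = e k"
        using c ekk by (simp add: mult.assoc)
      finally show ?thesis .
    qed
    ultimately show "(\<Sum>i<K. (B' i * mod_data J nj CY i Y) $$ (r,col)) + (\<Sum>i<L. S' i $$ (r,col))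
        = (\<Sum>i<K. (B i * mod_data J nj CY i Y) $$ (r,col)) + (\<Sum>i<L. S i $$ (r,col))"
      unfolding e_def f_def by simp
  qed
  have penB: "(\<Sum>i<K. lamB i * nuc_norm (B' i)) \<le> (\<Sum>i<K. lamB i * nuc_norm (B i)) - lamB k * nuc_norm (B k)"
  proof -
    have each: "lamB i * nuc_norm (B' i) \<le> lamB i * nuc_norm (B i) - (if i = k then lamB k * nuc_norm (B k) else 0)"
      if i: "i < K" for i
    proof (cases "i = k")
      case True
      have lk: "lamB k > 0" using lampos k by auto
      have "lamB i * nuc_norm (B' i) = lamB k * nuc_norm (0\<^sub>m p q)" unfolding B'_def using True by simp
      also have "\<dots> \<le> 0" using lk nuc_zero[of p q] by (intro mult_nonneg_nonpos) auto
      finally show ?thesis using True by simp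
    qed (simp add: B'_def)
    have "(\<Sum>i<K. lamB i * nuc_norm (B' i)) \<le> (\<Sum>i<K. lamB i * nuc_norm (B i) - (if i = k then lamB k * nuc_norm (B k) else 0))"
      by (rule sum_mono, simp add: each)
    also have "\<dots> = (\<Sum>i<K. lamB i * nuc_norm (B i)) - lamB k * nuc_norm (B k)"
      using k by (simp add: sum_subtractf)
    finally show ?thesis .
  qed
  have penS: "(\<Sum>i<L. lamS i * nuc_norm (S' i)) \<le> (\<Sum>i<L. lamS i * nuc_norm (S i)) + lamB k * nuc_norm (B k)"
  proof -
    have each: "lamS i * nuc_norm (S' i) \<le> lamS i * nuc_norm (S i)
       + (if i \<in> I then lamS i * nuc_norm Yk / real c * nuc_norm (B k) else 0)"
      if i: "i < L" for i
    proof (cases "i \<in> I")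
      case True
      have Si: "S i \<in> carrier_mat p n" using Sc i by auto
      have "nuc_norm (S' i) \<le> nuc_norm (S i) + nuc_norm ((1 / real c) \<cdot>\<^sub>m P i)"
        unfolding S'_def using True P[of i] by (simp add: nuc_add[OF Si])
      also have "nuc_norm ((1 / real c) \<cdot>\<^sub>m P i) \<le> nuc_norm (P i) / real c"
        using nuc_smult[OF P, of "1 / real c"] c by simp
      also have "nuc_norm (P i) \<le> nuc_norm (B k) * nuc_norm (Md i)"
        unfolding P_def by (rule nuc_mult[OF Bk Md])
      also have "nuc_norm (Md i) \<le> nuc_norm Yk" unfolding Md_def by (rule nuc_md)
      finally have "nuc_norm (S' i) \<le> nuc_norm (S i) + nuc_norm (B k) * nuc_norm Yk / real c"
        using c nuc_nonneg[of "B k"] by (simp add: divide_right_mono mult_left_mono)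
      hence "lamS i * nuc_norm (S' i) \<le> lamS i * (nuc_norm (S i) + nuc_norm (B k) * nuc_norm Yk / real c)"
        using lamSpos i by (intro mult_left_mono, auto)
      thus ?thesis using True by (simp add: algebra_simps)
    qed (simp add: S'_def)
    have "(\<Sum>i<L. lamS i * nuc_norm (S' i)) \<le> (\<Sum>i<L. lamS i * nuc_norm (S i)
       + (if i \<in> I then lamS i * nuc_norm Yk / real c * nuc_norm (B k) else 0))"
      by (rule sum_mono, simp add: each)
    also have "\<dots> = (\<Sum>i<L. lamS i * nuc_norm (S i)) + (\<Sum>i\<in>I. lamS i * nuc_norm Yk) / real c * nuc_norm (B k)"
      by (simp add: sum.distrib sum_if_subset[OF finite_lessThan IL] sum_divide_distrib sum_distrib_right)
    also have "\<dots> \<le> (\<Sum>i<L. lamS i * nuc_norm (S i)) + lamB k * nuc_norm (B k)"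
      using mult_right_mono[OF lamk[folded Yk_def] nuc_nonneg[of "B k"]] by simp
    finally show ?thesis .
  qed
  have "obj p n J nj K L CY X Y lamB lamS B' S' \<le> obj p n J nj K L CY X Y lamB lamS B S"
    by (rule obj_le, insert res penB penS, auto)
  moreover from minimizer_transfer[OF min feas' this]
  have "is_minimizer p q n J nj K L CY CS X Y lamB lamS B' S'" .
  ultimately show ?thesis using B'k by blast
qed

lemma part3:
  fixes S :: "nat \<Rightarrow> real mat"
  assumes l: "l < L" "l' < L" "l \<noteq> l'" and CSle: "\<forall>j<J. CS j l \<ge> CS j l'"
    and lam: "lamS l' \<ge> lamS l" "lamS l > 0" "lamS l' > 0"
    and min: "is_minimizer p q n J nj K L CY CS X Y lamB lamS B S"
  shows "\<exists>B' S'. is_minimizer p q n J nj K L CY CS X Y lamB lamS B' S' \<and>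
             obj p n J nj K L CY X Y lamB lamS B' S' \<le> obj p n J nj K L CY X Y lamB lamS B S \<and>
             S' l' = 0\<^sub>m p n"
proof -
  have feas: "feasible p q n J nj K L CS B S" using min unfolding is_minimizer_def by auto
  hence Sl: "S l \<in> S_set p n J nj CS l" and Sl': "S l' \<in> S_set p n J nj CS l'"
    using l unfolding feasible_def by auto
  have Slc: "S l \<in> carrier_mat p n" and Sl'c: "S l' \<in> carrier_mat p n"
    using Sl Sl' unfolding S_set_def by auto
  define S' where "S' = (S(l := S l + S l'))(l' := 0\<^sub>m p n)"
  have S'l: "S' l = S l + S l'" and S'l': "S' l' = 0\<^sub>m p n" unfolding S'_def using l by auto
  have S'o: "S' i = S i" if "i \<noteq> l" "i \<noteq> l'" for i unfolding S'_def using that by auto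
  have "S l + S l' \<in> S_set p n J nj CS l"
    unfolding S_set_def
  proof (intro CollectI conjI allI impI)
    show "S l + S l' \<in> carrier_mat p n" using Slc Sl'c by auto
    fix j r c assume j: "j < J" and z: "CS j l = 0" and r: "r < p" and c: "c < n" and b: "in_block nj j c"
    have z': "CS j l' = 0" using CSle j z by (metis le_zero_eq)
    have "S l $$ (r,c) = 0" using Sl j z r c b unfolding S_set_def by auto
    moreover have "S l' $$ (r,c) = 0" using Sl' j z' r c b unfolding S_set_def by auto
    ultimately show "(S l + S l') $$ (r,c) = 0" using Slc Sl'c r c by simp
  qed
  moreover have "0\<^sub>m p n \<in> S_set p n J nj CS l'" unfolding S_set_def by auto
  ultimately have feas': "feasible p q n J nj K L CS B S'"
    using feas unfolding feasible_def by (metis S'l S'l' S'o)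
  have res: "\<forall>r<p. \<forall>c<n. (\<Sum>k<K. (B k * mod_data J nj CY k Y) $$ (r,c)) + (\<Sum>i<L. S' i $$ (r,c))
        = (\<Sum>k<K. (B k * mod_data J nj CY k Y) $$ (r,c)) + (\<Sum>i<L. S i $$ (r,c))"
  proof (intro allI impI)
    fix r c assume r: "r < p" and c: "c < n"
    have "(\<Sum>i<L. S' i $$ (r,c)) = S' l $$ (r,c) + S' l' $$ (r,c) + (\<Sum>i\<in>{..<L} - {l} - {l'}. S' i $$ (r,c))"
      by (rule sum_two, insert l, auto)
    also have "(\<Sum>i\<in>{..<L} - {l} - {l'}. S' i $$ (r,c)) = (\<Sum>i\<in>{..<L} - {l} - {l'}. S i $$ (r,c))"
      by (rule sum.cong, auto simp: S'o)
    also have "S' l $$ (r,c) + S' l' $$ (r,c) = S l $$ (r,c) + S l' $$ (r,c)"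
      unfolding S'l S'l' using Slc Sl'c r c by simp
    also have "S l $$ (r,c) + S l' $$ (r,c) + (\<Sum>i\<in>{..<L} - {l} - {l'}. S i $$ (r,c)) = (\<Sum>i<L. S i $$ (r,c))"
      by (rule sum_two[symmetric], insert l, auto)
    finally show "(\<Sum>k<K. (B k * mod_data J nj CY k Y) $$ (r,c)) + (\<Sum>i<L. S' i $$ (r,c))
        = (\<Sum>k<K. (B k * mod_data J nj CY k Y) $$ (r,c)) + (\<Sum>i<L. S i $$ (r,c))" by simp
  qed
  have pen: "(\<Sum>i<L. lamS i * nuc_norm (S' i)) \<le> (\<Sum>i<L. lamS i * nuc_norm (S i))"
  proof -
    have "(\<Sum>i<L. lamS i * nuc_norm (S' i)) = lamS l * nuc_norm (S' l) + lamS l' * nuc_norm (S' l')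
       + (\<Sum>i\<in>{..<L} - {l} - {l'}. lamS i * nuc_norm (S' i))"
      by (rule sum_two, insert l, auto)
    also have "(\<Sum>i\<in>{..<L} - {l} - {l'}. lamS i * nuc_norm (S' i)) = (\<Sum>i\<in>{..<L} - {l} - {l'}. lamS i * nuc_norm (S i))"
      by (rule sum.cong, auto simp: S'o)
    also have "lamS l * nuc_norm (S' l) + lamS l' * nuc_norm (S' l') \<le> lamS l * nuc_norm (S l) + lamS l' * nuc_norm (S l')"
    proof -
      have "lamS l * nuc_norm (S' l) \<le> lamS l * (nuc_norm (S l) + nuc_norm (S l'))"
        unfolding S'l using lam by (intro mult_left_mono nuc_add[OF Slc Sl'c], auto)
      also have "\<dots> \<le> lamS l * nuc_norm (S l) + lamS l' * nuc_norm (S l')"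
        using lam nuc_nonneg[of "S l'"] by (simp add: algebra_simps mult_right_mono)
      finally have 1: "lamS l * nuc_norm (S' l) \<le> lamS l * nuc_norm (S l) + lamS l' * nuc_norm (S l')" .
      have "lamS l' * nuc_norm (S' l') \<le> 0" unfolding S'l'
        using lam nuc_zero[of p n] by (simp add: mult_nonneg_nonpos)
      with 1 show ?thesis by simp
    qed
    also have "lamS l * nuc_norm (S l) + lamS l' * nuc_norm (S l') + (\<Sum>i\<in>{..<L} - {l} - {l'}. lamS i * nuc_norm (S i))
       = (\<Sum>i<L. lamS i * nuc_norm (S i))"
      by (rule sum_two[symmetric], insert l, auto)
    finally show ?thesis by simp
  qed
  have "obj p n J nj K L CY X Y lamB lamS B S' \<le> obj p n J nj K L CY X Y lamB lamS B S"
    by (rule obj_le, insert res pen, auto)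
  moreover from minimizer_transfer[OF min feas' this]
  have "is_minimizer p q n J nj K L CY CS X Y lamB lamS B S'" .
  ultimately show ?thesis using S'l' by blast
qed

lemma part4:
  fixes S :: "nat \<Rightarrow> real mat" and c :: nat
  assumes l: "l < L" and I: "I \<subseteq> {..<L} - {l}" and c: "c > 0"
    and CSsum: "\<forall>j<J. (\<Sum>i\<in>I. CS j i) = c * CS j l"
    and laml: "lamS l \<ge> (\<Sum>i\<in>I. lamS i) / real c"
    and lampos: "\<forall>l<L. lamS l > 0"
    and CS01: "\<forall>j<J. \<forall>l<L. CS j l \<in> {0,1}"
    and n: "n = (\<Sum>j<J. nj j)"
    and min: "is_minimizer p q n J nj K L CY CS X Y lamB lamS B S"
  shows "\<exists>B' S'. is_minimizer p q n J nj K L CY CS X Y lamB lamS B' S' \<and>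
             obj p n J nj K L CY X Y lamB lamS B' S' \<le> obj p n J nj K L CY X Y lamB lamS B S \<and>
             S' l = 0\<^sub>m p n"
proof -
  have feas: "feasible p q n J nj K L CS B S" using min unfolding is_minimizer_def by auto
  hence Sset: "\<And>i. i < L \<Longrightarrow> S i \<in> S_set p n J nj CS i" unfolding feasible_def by auto
  have Sc: "\<And>i. i < L \<Longrightarrow> S i \<in> carrier_mat p n" using Sset unfolding S_set_def by auto
  have Sl: "S l \<in> carrier_mat p n" using Sc l by auto
  have finI: "finite I" using I finite_subset by blast
  have lI: "l \<notin> I" using I by auto
  have IL: "I \<subseteq> {..<L}" using I by auto
  define Md where "Md i = mod_data J nj CS i (S l)" for i
  have Md: "Md i \<in> carrier_mat p n" for i unfolding Md_def using md_carrier[OF Sl] .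
  define S' where "S' i = (if i \<in> I then S i + (1 / real c) \<cdot>\<^sub>m Md i else if i = l then 0\<^sub>m p n else S i)" for i
  have S'l: "S' l = 0\<^sub>m p n" unfolding S'_def using lI by simp
  have S'set: "S' i \<in> S_set p n J nj CS i" if i: "i < L" for i
  proof (cases "i \<in> I")
    case True
    have Si: "S i \<in> carrier_mat p n" using Sc i by auto
    show ?thesis unfolding S_set_def
    proof (intro CollectI conjI allI impI)
      show "S' i \<in> carrier_mat p n" unfolding S'_def using True Si Md by auto
      fix j r col assume j: "j < J" and z: "CS j i = 0" and r: "r < p" and col: "col < n" and b: "in_block nj j col"
      have "S i $$ (r,col) = 0" using Sset[OF i] j z r col b unfolding S_set_def by auto
      moreover have "Md i $$ (r,col) = 0" unfolding Md_def using md_entry[of r "S l" col j J nj CS i] Sl r col j b z by auto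
      ultimately show "S' i $$ (r,col) = 0" unfolding S'_def using True Si Md[of i] r col by simp
    qed
  next
    case False
    thus ?thesis unfolding S'_def using Sset[OF i] by (auto simp: S_set_def)
  qed
  have feas': "feasible p q n J nj K L CS B S'"
    using feas S'set unfolding feasible_def by auto
  have res: "\<forall>r<p. \<forall>col<n. (\<Sum>k<K. (B k * mod_data J nj CY k Y) $$ (r,col)) + (\<Sum>i<L. S' i $$ (r,col))
        = (\<Sum>k<K. (B k * mod_data J nj CY k Y) $$ (r,col)) + (\<Sum>i<L. S i $$ (r,col))"
  proof (intro allI impI)
    fix r col assume r: "r < p" and col: "col < n"
    from in_block_exists[of col nj J] col n obtain jc where jc: "jc < J" "in_block nj jc col" by auto
    define e where "e i = S i $$ (r,col)" for i
    define d where "d i = Md i $$ (r,col)" for i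
    have d: "d i = real (CS jc i) * e l" if "i < L" for i
      unfolding d_def Md_def e_def by (rule md_entry01, insert that Sl r col jc CS01, auto)
    have e': "S' i $$ (r,col) = e i + (if i \<in> I then d i / real c else 0) - (if i = l then e l else 0)"
      if i: "i < L" for i
    proof (cases "i \<in> I")
      case True
      have Si: "S i \<in> carrier_mat p n" using Sc i by auto
      have "S' i $$ (r,col) = e i + d i / real c"
        unfolding S'_def e_def d_def using True Si Md[of i] r col by simp
      thus ?thesis using True lI by auto
    next
      case False
      show ?thesis
      proof (cases "i = l")
        case True
        show ?thesis unfolding S'_def e_def using False True r col by simp
      next
        case False2: False
        show ?thesis unfolding S'_def e_def using False False2 by simp
      qed
    qed
    have el: "real (CS jc l) * e l = e l"
    proof (cases "CS jc l = 0")
      case True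
      have "e l = 0" unfolding e_def using Sset[OF l] jc True r col unfolding S_set_def by auto
      thus ?thesis by simp
    next
      case False
      moreover have "CS jc l \<in> {0,1}" using CS01 jc l by blast
      ultimately have "CS jc l = 1" by auto
      thus ?thesis by simp
    qed
    have "(\<Sum>i<L. S' i $$ (r,col)) = (\<Sum>i<L. e i + (if i \<in> I then d i / real c else 0) - (if i = l then e l else 0))"
      by (rule sum.cong, auto simp: e')
    also have "\<dots> = (\<Sum>i<L. e i) + (\<Sum>i\<in>I. d i / real c) - e l"
      using IL l by (simp add: sum.distrib sum_subtractf sum_if_subset[OF finite_lessThan IL])
    also have "(\<Sum>i\<in>I. d i / real c) = (\<Sum>i\<in>I. real (CS jc i)) * e l / real c"
      using IL by (simp add: sum_divide_distrib sum_distrib_right d subset_iff)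
    also have "(\<Sum>i\<in>I. real (CS jc i)) = real c * real (CS jc l)"
      using CSsum jc by (metis of_nat_mult of_nat_sum)
    also have "real c * real (CS jc l) * e l / real c = e l"
      using c el by simp
    finally show "(\<Sum>k<K. (B k * mod_data J nj CY k Y) $$ (r,col)) + (\<Sum>i<L. S' i $$ (r,col))
        = (\<Sum>k<K. (B k * mod_data J nj CY k Y) $$ (r,col)) + (\<Sum>i<L. S i $$ (r,col))" unfolding e_def by simp
  qed
  have pen: "(\<Sum>i<L. lamS i * nuc_norm (S' i)) \<le> (\<Sum>i<L. lamS i * nuc_norm (S i))"
  proof -
    have each: "lamS i * nuc_norm (S' i) \<le> lamS i * nuc_norm (S i)
       + (if i \<in> I then lamS i * nuc_norm (S l) / real c else 0) - (if i = l then lamS l * nuc_norm (S l) else 0)"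
      if i: "i < L" for i
    proof (cases "i \<in> I")
      case True
      have Si: "S i \<in> carrier_mat p n" using Sc i by auto
      have "nuc_norm (S' i) \<le> nuc_norm (S i) + nuc_norm ((1 / real c) \<cdot>\<^sub>m Md i)"
        unfolding S'_def using True Md by (simp add: nuc_add[OF Si])
      also have "nuc_norm ((1 / real c) \<cdot>\<^sub>m Md i) \<le> nuc_norm (Md i) / real c"
        using nuc_smult[OF Md, of "1 / real c"] c by simp
      also have "nuc_norm (Md i) / real c \<le> nuc_norm (S l) / real c"
        unfolding Md_def using c nuc_md by (intro divide_right_mono) auto
      finally have "nuc_norm (S' i) \<le> nuc_norm (S i) + nuc_norm (S l) / real c" by simp
      hence "lamS i * nuc_norm (S' i) \<le> lamS i * (nuc_norm (S i) + nuc_norm (S l) / real c)"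
        using lampos i by (intro mult_left_mono, auto)
      moreover have "i \<noteq> l" using True lI by auto
      ultimately show ?thesis using True by (simp add: algebra_simps)
    next
      case False
      show ?thesis
      proof (cases "i = l")
        case True
        have ll: "lamS l > 0" using lampos l by auto
        have "lamS i * nuc_norm (S' i) = lamS l * nuc_norm (0\<^sub>m p n)" unfolding S'_def using False True by simp
        also have "\<dots> \<le> 0" using ll nuc_zero[of p n] by (intro mult_nonneg_nonpos) auto
        finally have "lamS i * nuc_norm (S' i) \<le> 0" .
        thus ?thesis using False True by simp
      next
        case False2: False
        show ?thesis unfolding S'_def using False False2 by simp
      qed
    qed
    have "(\<Sum>i<L. lamS i * nuc_norm (S' i)) \<le> (\<Sum>i<L. lamS i * nuc_norm (S i)
       + (if i \<in> I then lamS i * nuc_norm (S l) / real c else 0) - (if i = l then lamS l * nuc_norm (S l) else 0))"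
      by (rule sum_mono, simp add: each)
    also have "\<dots> = (\<Sum>i<L. lamS i * nuc_norm (S i)) + (\<Sum>i\<in>I. lamS i) / real c * nuc_norm (S l) - lamS l * nuc_norm (S l)"
      using IL l by (simp add: sum.distrib sum_subtractf sum_if_subset[OF finite_lessThan IL] sum_divide_distrib sum_distrib_right)
    also have "\<dots> \<le> (\<Sum>i<L. lamS i * nuc_norm (S i))"
      using mult_right_mono[OF laml nuc_nonneg[of "S l"]] by simp
    finally show ?thesis .
  qed
  have "obj p n J nj K L CY X Y lamB lamS B S' \<le> obj p n J nj K L CY X Y lamB lamS B S"
    by (rule obj_le, insert res pen, auto)
  moreover from minimizer_transfer[OF min feas' this]
  have "is_minimizer p q n J nj K L CY CS X Y lamB lamS B S'" .
  ultimately show ?thesis using S'l by blast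
qed

theorem proposition1:
  fixes J K L p q n :: nat and nj :: "nat \<Rightarrow> nat"
    and X Y :: "real mat" and CY CS :: "nat \<Rightarrow> nat \<Rightarrow> nat"
    and lamB lamS :: "nat \<Rightarrow> real"
  assumes "J \<ge> 1" and "p \<ge> 1" and "q \<ge> 1"
    and "\<forall>j<J. nj j \<ge> 1"
    and "n = (\<Sum>j<J. nj j)"
    and "X \<in> carrier_mat p n" and "Y \<in> carrier_mat q n"
    and "\<forall>j<J. \<forall>k<K. CY j k \<in> {0,1}"
    and "\<forall>j<J. \<forall>l<L. CS j l \<in> {0,1}"
    and "\<forall>k<K. lamB k > 0" and "\<forall>l<L. lamS l > 0"
  shows
  \<comment> \<open>1. failure of condition 1 for module B_k\<close>
  "(\<forall>k<K. (\<exists>I (c::nat). I \<subseteq> {..<K} - {k} \<and> c > 0 \<and>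
          (\<forall>j<J. (\<Sum>i\<in>I. CY j i) = c * CY j k) \<and>
          lamB k \<ge> (\<Sum>i\<in>I. lamB i) / real c) \<longrightarrow>
       (\<forall>B S. is_minimizer p q n J nj K L CY CS X Y lamB lamS B S \<longrightarrow>
          (\<exists>B' S'. is_minimizer p q n J nj K L CY CS X Y lamB lamS B' S' \<and>
             obj p n J nj K L CY X Y lamB lamS B' S' \<le> obj p n J nj K L CY X Y lamB lamS B S \<and>
             B' k = 0\<^sub>m p q)))
   \<and>
  \<comment> \<open>2. failure of condition 2 for module B_k\<close>
   (\<forall>k<K. (\<exists>I (c::nat). I \<subseteq> {..<L} \<and> c > 0 \<and>
          (\<forall>j<J. (\<Sum>i\<in>I. CS j i) = c * CY j k) \<and>
          lamB k \<ge> (\<Sum>i\<in>I. lamS i * nuc_norm (mod_data J nj CY k Y)) / real c) \<longrightarrow>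
       (\<forall>B S. is_minimizer p q n J nj K L CY CS X Y lamB lamS B S \<longrightarrow>
          (\<exists>B' S'. is_minimizer p q n J nj K L CY CS X Y lamB lamS B' S' \<and>
             obj p n J nj K L CY X Y lamB lamS B' S' \<le> obj p n J nj K L CY X Y lamB lamS B S \<and>
             B' k = 0\<^sub>m p q)))
   \<and>
  \<comment> \<open>3. failure of condition 3 for module S^(l')\<close>
   (\<forall>l<L. \<forall>l'<L. (l \<noteq> l' \<and> (\<forall>j<J. CS j l \<ge> CS j l') \<and> lamS l' \<ge> lamS l) \<longrightarrow>
       (\<forall>B S. is_minimizer p q n J nj K L CY CS X Y lamB lamS B S \<longrightarrow>
          (\<exists>B' S'. is_minimizer p q n J nj K L CY CS X Y lamB lamS B' S' \<and>
             obj p n J nj K L CY X Y lamB lamS B' S' \<le> obj p n J nj K L CY X Y lamB lamS B S \<and>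
             S' l' = 0\<^sub>m p n)))
   \<and>
  \<comment> \<open>4. failure of condition 4 for module S^(l)\<close>
   (\<forall>l<L. (\<exists>I (c::nat). I \<subseteq> {..<L} - {l} \<and> c > 0 \<and>
          (\<forall>j<J. (\<Sum>i\<in>I. CS j i) = c * CS j l) \<and>
          lamS l \<ge> (\<Sum>i\<in>I. lamS i) / real c) \<longrightarrow>
       (\<forall>B S. is_minimizer p q n J nj K L CY CS X Y lamB lamS B S \<longrightarrow>
          (\<exists>B' S'. is_minimizer p q n J nj K L CY CS X Y lamB lamS B' S' \<and>
             obj p n J nj K L CY X Y lamB lamS B' S' \<le> obj p n J nj K L CY X Y lamB lamS B S \<and>
             S' l = 0\<^sub>m p n)))"
  proof -
  have lp: "\<forall>k<K. lamB k > 0" and ls: "\<forall>l<L. lamS l > 0"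
    and cy: "\<forall>j<J. \<forall>k<K. CY j k \<in> {0,1}" and cs: "\<forall>j<J. \<forall>l<L. CS j l \<in> {0,1}"
    and nn: "n = (\<Sum>j<J. nj j)" and YY: "Y \<in> carrier_mat q n" using assms by auto
  show ?thesis
  proof (intro conjI)
    show "\<forall>k<K. (\<exists>I (c::nat). I \<subseteq> {..<K} - {k} \<and> c > 0 \<and>
          (\<forall>j<J. (\<Sum>i\<in>I. CY j i) = c * CY j k) \<and>
          lamB k \<ge> (\<Sum>i\<in>I. lamB i) / real c) \<longrightarrow>
       (\<forall>B S. is_minimizer p q n J nj K L CY CS X Y lamB lamS B S \<longrightarrow>
          (\<exists>B' S'. is_minimizer p q n J nj K L CY CS X Y lamB lamS B' S' \<and>
             obj p n J nj K L CY X Y lamB lamS B' S' \<le> obj p n J nj K L CY X Y lamB lamS B S \<and>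
             B' k = 0\<^sub>m p q))"
    proof (intro allI impI)
      fix k B S
      assume k: "k < K" and h: "\<exists>I (c::nat). I \<subseteq> {..<K} - {k} \<and> c > 0 \<and>
          (\<forall>j<J. (\<Sum>i\<in>I. CY j i) = c * CY j k) \<and>
          lamB k \<ge> (\<Sum>i\<in>I. lamB i) / real c"
        and m: "is_minimizer p q n J nj K L CY CS X Y lamB lamS B S"
      from h obtain I and c :: nat where I: "I \<subseteq> {..<K} - {k}" and c: "c > 0"
        and cs1: "\<forall>j<J. (\<Sum>i\<in>I. CY j i) = c * CY j k" and lk: "lamB k \<ge> (\<Sum>i\<in>I. lamB i) / real c"
        by blast
      show "\<exists>B' S'. is_minimizer p q n J nj K L CY CS X Y lamB lamS B' S' \<and>
             obj p n J nj K L CY X Y lamB lamS B' S' \<le> obj p n J nj K L CY X Y lamB lamS B S \<and>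
             B' k = 0\<^sub>m p q"
        by (rule part1[OF k I c cs1 lk lp cy nn YY m])
    qed
  next
    show "\<forall>k<K. (\<exists>I (c::nat). I \<subseteq> {..<L} \<and> c > 0 \<and>
          (\<forall>j<J. (\<Sum>i\<in>I. CS j i) = c * CY j k) \<and>
          lamB k \<ge> (\<Sum>i\<in>I. lamS i * nuc_norm (mod_data J nj CY k Y)) / real c) \<longrightarrow>
       (\<forall>B S. is_minimizer p q n J nj K L CY CS X Y lamB lamS B S \<longrightarrow>
          (\<exists>B' S'. is_minimizer p q n J nj K L CY CS X Y lamB lamS B' S' \<and>
             obj p n J nj K L CY X Y lamB lamS B' S' \<le> obj p n J nj K L CY X Y lamB lamS B S \<and>
             B' k = 0\<^sub>m p q))"
    proof (intro allI impI)
      fix k B S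
      assume k: "k < K" and h: "\<exists>I (c::nat). I \<subseteq> {..<L} \<and> c > 0 \<and>
          (\<forall>j<J. (\<Sum>i\<in>I. CS j i) = c * CY j k) \<and>
          lamB k \<ge> (\<Sum>i\<in>I. lamS i * nuc_norm (mod_data J nj CY k Y)) / real c"
        and m: "is_minimizer p q n J nj K L CY CS X Y lamB lamS B S"
      from h obtain I and c :: nat where I: "I \<subseteq> {..<L}" and c: "c > 0"
        and cs1: "\<forall>j<J. (\<Sum>i\<in>I. CS j i) = c * CY j k"
        and lk: "lamB k \<ge> (\<Sum>i\<in>I. lamS i * nuc_norm (mod_data J nj CY k Y)) / real c"
        by blast
      show "\<exists>B' S'. is_minimizer p q n J nj K L CY CS X Y lamB lamS B' S' \<and>
             obj p n J nj K L CY X Y lamB lamS B' S' \<le> obj p n J nj K L CY X Y lamB lamS B S \<and>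
             B' k = 0\<^sub>m p q"
        by (rule part2[OF k I c cs1 lk lp ls cy cs nn YY m])
    qed
  next
    show "\<forall>l<L. \<forall>l'<L. (l \<noteq> l' \<and> (\<forall>j<J. CS j l \<ge> CS j l') \<and> lamS l' \<ge> lamS l) \<longrightarrow>
       (\<forall>B S. is_minimizer p q n J nj K L CY CS X Y lamB lamS B S \<longrightarrow>
          (\<exists>B' S'. is_minimizer p q n J nj K L CY CS X Y lamB lamS B' S' \<and>
             obj p n J nj K L CY X Y lamB lamS B' S' \<le> obj p n J nj K L CY X Y lamB lamS B S \<and>
             S' l' = 0\<^sub>m p n))"
    proof (intro allI impI)
      fix l l' B S
      assume l: "l < L" and l': "l' < L" and h: "l \<noteq> l' \<and> (\<forall>j<J. CS j l \<ge> CS j l') \<and> lamS l' \<ge> lamS l"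
        and m: "is_minimizer p q n J nj K L CY CS X Y lamB lamS B S"
      have p1: "lamS l > 0" "lamS l' > 0" using ls l l' by auto
      show "\<exists>B' S'. is_minimizer p q n J nj K L CY CS X Y lamB lamS B' S' \<and>
             obj p n J nj K L CY X Y lamB lamS B' S' \<le> obj p n J nj K L CY X Y lamB lamS B S \<and>
             S' l' = 0\<^sub>m p n"
        using part3[OF l l' _ _ _ p1 m] h by blast
    qed
  next
    show "\<forall>l<L. (\<exists>I (c::nat). I \<subseteq> {..<L} - {l} \<and> c > 0 \<and>
          (\<forall>j<J. (\<Sum>i\<in>I. CS j i) = c * CS j l) \<and>
          lamS l \<ge> (\<Sum>i\<in>I. lamS i) / real c) \<longrightarrow>
       (\<forall>B S. is_minimizer p q n J nj K L CY CS X Y lamB lamS B S \<longrightarrow>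
          (\<exists>B' S'. is_minimizer p q n J nj K L CY CS X Y lamB lamS B' S' \<and>
             obj p n J nj K L CY X Y lamB lamS B' S' \<le> obj p n J nj K L CY X Y lamB lamS B S \<and>
             S' l = 0\<^sub>m p n))"
    proof (intro allI impI)
      fix l B S
      assume l: "l < L" and h: "\<exists>I (c::nat). I \<subseteq> {..<L} - {l} \<and> c > 0 \<and>
          (\<forall>j<J. (\<Sum>i\<in>I. CS j i) = c * CS j l) \<and>
          lamS l \<ge> (\<Sum>i\<in>I. lamS i) / real c"
        and m: "is_minimizer p q n J nj K L CY CS X Y lamB lamS B S"
      from h obtain I and c :: nat where I: "I \<subseteq> {..<L} - {l}" and c: "c > 0"
        and cs1: "\<forall>j<J. (\<Sum>i\<in>I. CS j i) = c * CS j l" and lk: "lamS l \<ge> (\<Sum>i\<in>I. lamS i) / real c"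
        by blast
      show "\<exists>B' S'. is_minimizer p q n J nj K L CY CS X Y lamB lamS B' S' \<and>
             obj p n J nj K L CY X Y lamB lamS B' S' \<le> obj p n J nj K L CY X Y lamB lamS B S \<and>
             S' l = 0\<^sub>m p n"
        by (rule part4[OF l I c cs1 lk ls cs nn m])
    qed
  qed
qed

end
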